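(* Fix a binary $s$-state information source (as defined in the context) and let $\mu(x)$ denote the probability it assigns to a finite binary string $x$. Then there is a sequence $\delta_n\to0$ (as $n\to\infty$) such that for every $n\in\{2,4,8,16,\dots\}$, $$\max_{x\in\{0,1\}^n\cap S(\mathrm{dyadic})}\left(|\sigma(G_x)|+\log_2\mu(x)\right)\le\frac{n}{\log_2 n}\left(16+4\log_2 s+\delta_n\right),$$ where $|\sigma(G_x)|$ is the length of the codeword assigned to $x$ (with the convention $\log_2 0=-\infty$).
   Context: $S(\mathrm{dyadic})$ is the set of binary strings $x$ whose length is a power of two, whose left half differs from its right half, and which contain at least one $0$ and at least one $1$. Graphs. $\mathcal{G}$ is the set of all finite directed acyclic graphs $G$ such that: $G$ has a unique nonterminal root $V_G^r$ from which every other vertex is reachable by a directed path; $G$ has exactly two terminal vertices (no outgoing edges) $T_G^0,T_G^1$; each nonterminal vertex has exactly two outgoing edges, labelled $0$ and $1$, ending at different vertices; each vertex $V$ has a positive integer level $L(V)$ with $L(V_G^r)=1$, $L(T_G^0)=L(T_G^1)$, and levels strictly increasing along directed paths. For binary strings, $y^j$ is $j$ concatenated copies of $y$. Define $\phi_G$ on vertices by $\phi_G(T_G^0)=0$, $\phi_G(T_G^1)=1$, and for nonterminal $V$ with $0$-edge to $V_0$ and $1$-edge to $V_1$, $\phi_G(V)=\phi_G(V_0)^{(2^{L(V_0)-L(V)-1})}\phi_G(V_1)^{(2^{L(V_1)-L(V)-1})}$. $\mathcal{G}^*$ is the set of $G\in\mathcal{G}$ for which $\phi_G$ is one-to-one.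 For each $x\in S(\mathrm{dyadic})$ there is a unique $G\in\mathcal{G}^*$ with $\phi_G(V_G^r)=x$ (the reduced ordered binary decision diagram of the Boolean function whose truth table is $x$); it is denoted $G_x$. Canonical ordering. For $G\in\mathcal{G}^*$ with $j$ vertices, $A_1,\dots,A_j$ is the unique enumeration of the vertices such that $A_1=V_G^r$, and, if $A_{q_1},\dots,A_{q_{j-2}}$ ($q_1<\dots<q_{j-2}$) are the nonterminal vertices and $A_{q_t}$ has $0$-edge to $A_{r_t}$ and $1$-edge to $A_{s_t}$, then listing the distinct entries of $(A_{r_1},A_{s_1},\dots,A_{r_{j-2}},A_{s_{j-2}})$ in order of first left-to-right appearance gives $A_2,\dots,A_j$. Sequences. Entries are symbols $A_m^q$ ($q\ge1$), $A_m^1$ written $A_m$. With $L(T_G^0)=k+1$, $S_1=(A_1)$; for $2\le i\le k+1$, let $U$ be the distinct entries of $S_{i-1}$ in order of first appearance; replace each entry $A_m^q$ of $U$ with $q>1$ by $A_m^{q-1}$, and each entry $A_m$ by $A_{m_0}^{q_0},A_{m_1}^{q_1}$, where $A_{m_0},A_{m_1}$ are the endpoints of the $0$- and $1$-edges from $A_m$ and $q_b=L(A_{m_b})-L(A_m)$; $S_i$ is the concatenation of the replacements in order. $\hat S_i$ is the subsequence of $S_i$ of entries produced from entries of $U$ with exponent $1$. An entry $A_m^q$ of $\hat S_i$ is Type I if $A_m^{q+1}$ appears in $S_{i-1}$, Type II if no $A_m^p$ ($p\ge1$) appears in $S_{i-1}$; $\pi_i^1,\pi_i^2$ are the subsequences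 of Type I, Type II entries of $\hat S_i$. $Q_i$ is the sum of the exponents $q$ over the distinct symbols $A_m^q$ occurring in $\pi_i^2$. $|u|$ is the length of a sequence $u$; for nonempty $u=(u_1,\dots,u_J)$, $H(u)=\sum_{t=1}^J-\log_2\frac{n(u_t)}{J}$ with $n(a)=\#\{t:u_t=a\}$, and $H(\text{empty})=0$; $\tilde u$ is $u$ with every first left-to-right occurrence of a symbol deleted. Codeword. The encoder maps $x\in S(\mathrm{dyadic})$ to a binary codeword $\sigma(G_x)$ from which $x$ is recoverable; for $G\in\mathcal{G}^*$ with $L(T_G^0)=k+1$ the codeword $\sigma(G)$ has length $|\sigma(G)|=1+\sum_{i=2}^{k+1}M_i$, where $M_i=|S_i|+|\hat S_i|+Q_i+\lceil H(\pi_i^1)\rceil+\lceil H(\tilde\pi_i^2)\rceil$. Source. A binary $s$-state information source is given by a state set $\{1,\dots,s\}$, an initial distribution $p_0$ on it, and transition probabilities $p(b,t\mid r)\ge0$ ($b\in\{0,1\}$, states $r,t$) with $\sum_{b,t}p(b,t\mid r)=1$ for each $r$; it assigns to $x=x_1\cdots x_n$ the probability $\mu(x)=\sum_{r_0,\dots,r_n}p_0(r_0)\prod_{i=1}^n p(x_i,r_i\mid r_{i-1})$. *)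

theory Defs
  imports "HOL-Analysis.Analysis"
begin

text \<open>Binary strings are lists of booleans (False = 0, True = 1).\<close>

definition S_dyadic :: "bool list set" where
  "S_dyadic = {x. (\<exists>k. length x = 2 ^ k)
      \<and> take (length x div 2) x \<noteq> drop (length x div 2) x
      \<and> False \<in> set x \<and> True \<in> set x}"

definition rep :: "nat \<Rightarrow> bool list \<Rightarrow> bool list" where
  "rep j y = concat (replicate j y)"

text \<open>A graph: vertex set, root, terminals T0 and T1, the 0-edge and 1-edge
  successor functions (meaningful on nonterminal vertices) and the level function.
  Vertices are natural numbers (any finite graph can be relabelled so).\<close>

record graph =
  verts :: "nat set"
  root :: nat
  term0 :: nat
  term1 :: nat
  succ0 :: "nat \<Rightarrow> nat"
  succ1 :: "nat \<Rightarrow> nat"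
  lev :: "nat \<Rightarrow> nat"

definition nonterms :: "graph \<Rightarrow> nat set" where
  "nonterms G = verts G - {term0 G, term1 G}"

definition edges :: "graph \<Rightarrow> (nat \<times> nat) set" where
  "edges G = {(v, succ0 G v) | v. v \<in> nonterms G} \<union> {(v, succ1 G v) | v. v \<in> nonterms G}"

definition in_calG :: "graph \<Rightarrow> bool" where
  "in_calG G \<longleftrightarrow> finite (verts G)
     \<and> root G \<in> verts G \<and> term0 G \<in> verts G \<and> term1 G \<in> verts G
     \<and> term0 G \<noteq> term1 G \<and> root G \<noteq> term0 G \<and> root G \<noteq> term1 G
     \<and> (\<forall>v\<in>nonterms G. succ0 G v \<in> verts G \<and> succ1 G v \<in> verts G \<and> succ0 G v \<noteq> succ1 G v)
     \<and> (\<forall>v\<in>verts G. (root G, v) \<in> (edges G)\<^sup>*)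
     \<and> (\<forall>v\<in>verts G. lev G v \<ge> 1)
     \<and> lev G (root G) = 1
     \<and> lev G (term0 G) = lev G (term1 G)
     \<and> (\<forall>v\<in>nonterms G. lev G v < lev G (succ0 G v) \<and> lev G v < lev G (succ1 G v))"

text \<open>Since levels strictly
  increase along edges, every directed path in G has fewer than card (verts G) edges,
  so card (verts G) recursion steps suffice (the fuel is never exhausted).\<close>

fun phi_fuel :: "nat \<Rightarrow> graph \<Rightarrow> nat \<Rightarrow> bool list" where
  "phi_fuel 0 G v = (if v = term1 G then [True] else [False])"
| "phi_fuel (Suc f) G v =
     (if v = term0 G then [False]
      else if v = term1 G then [True]
      else rep (2 ^ (lev G (succ0 G v) - lev G v - 1)) (phi_fuel f G (succ0 G v))
         @ rep (2 ^ (lev G (succ1 G v) - lev G v - 1)) (phi_fuel f G (succ1 G v)))"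

definition phi :: "graph \<Rightarrow> nat \<Rightarrow> bool list" where
  "phi G v = phi_fuel (card (verts G)) G v"

definition in_calG_star :: "graph \<Rightarrow> bool" where
  "in_calG_star G \<longleftrightarrow> in_calG G \<and> inj_on (phi G) (verts G)"

text \<open>A symbol A_m^q is represented as the pair (vertex, q).\<close>

definition repl :: "graph \<Rightarrow> nat \<times> nat \<Rightarrow> (nat \<times> nat) list" where
  "repl G a = (case a of (m, q) \<Rightarrow>
     if q > 1 then [(m, q - 1)]
     else [(succ0 G m, lev G (succ0 G m) - lev G m), (succ1 G m, lev G (succ1 G m) - lev G m)])"

definition nextS :: "graph \<Rightarrow> (nat \<times> nat) list \<Rightarrow> (nat \<times> nat) list" where
  "nextS G prev = concat (map (repl G) (remdups prev))"

definition hatS :: "graph \<Rightarrow> (nat \<times> nat) list \<Rightarrow> (nat \<times> nat) list" where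
  "hatS G prev = concat (map (repl G) (filter (\<lambda>a. snd a = 1) (remdups prev)))"

text \<open>Sseq G j is S_(j+1); so Sseq G 0 = S_1 = (A_1).\<close>
fun Sseq :: "graph \<Rightarrow> nat \<Rightarrow> (nat \<times> nat) list" where
  "Sseq G 0 = [(root G, 1)]"
| "Sseq G (Suc j) = nextS G (Sseq G j)"

definition pi1 :: "graph \<Rightarrow> (nat \<times> nat) list \<Rightarrow> (nat \<times> nat) list" where
  "pi1 G prev = filter (\<lambda>(m, q). (m, q + 1) \<in> set prev) (hatS G prev)"

definition pi2 :: "graph \<Rightarrow> (nat \<times> nat) list \<Rightarrow> (nat \<times> nat) list" where
  "pi2 G prev = filter (\<lambda>(m, q). m \<notin> fst ` set prev) (hatS G prev)"

definition Qval :: "graph \<Rightarrow> (nat \<times> nat) list \<Rightarrow> nat" where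
  "Qval G prev = (\<Sum>a\<in>set (pi2 G prev). snd a)"

text \<open>Empirical entropy H(u); H(empty) = 0 holds since the sum is then empty.\<close>
definition Hent :: "'a list \<Rightarrow> real" where
  "Hent u = (\<Sum>t<length u. - log 2 (real (count_list u (u ! t)) / real (length u)))"

fun tilde_aux :: "'a set \<Rightarrow> 'a list \<Rightarrow> 'a list" where
  "tilde_aux seen [] = []"
| "tilde_aux seen (a # u) =
     (if a \<in> seen then a # tilde_aux seen u else tilde_aux (insert a seen) u)"

definition tilde :: "'a list \<Rightarrow> 'a list" where
  "tilde u = tilde_aux {} u"

definition Mval :: "graph \<Rightarrow> (nat \<times> nat) list \<Rightarrow> int" where
  "Mval G prev = int (length (nextS G prev)) + int (length (hatS G prev)) + int (Qval G prev)
      + \<lceil>Hent (pi1 G prev)\<rceil> + \<lceil>Hent (tilde (pi2 G prev))\<rceil>"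

text \<open>Codeword length |sigma(G)| = 1 + sum_(i=2)^(k+1) M_i, where L(T0) = k+1;
  M_i is computed from S_(i-1) = Sseq G (i-2).\<close>
definition sigma_len :: "graph \<Rightarrow> int" where
  "sigma_len G = 1 + (\<Sum>i\<in>{2..lev G (term0 G)}. Mval G (Sseq G (i - 2)))"

text \<open>States are 1..s; p0 is the initial distribution and p b t r = p(b,t|r).\<close>
definition is_source :: "nat \<Rightarrow> (nat \<Rightarrow> real) \<Rightarrow> (bool \<Rightarrow> nat \<Rightarrow> nat \<Rightarrow> real) \<Rightarrow> bool" where
  "is_source s p0 p \<longleftrightarrow> s \<ge> 1
     \<and> (\<forall>r\<in>{1..s}. p0 r \<ge> 0) \<and> (\<Sum>r\<in>{1..s}. p0 r) = 1
     \<and> (\<forall>b r t. r \<in> {1..s} \<longrightarrow> t \<in> {1..s} \<longrightarrow> p b t r \<ge> 0)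
     \<and> (\<forall>r\<in>{1..s}. (\<Sum>b\<in>UNIV. \<Sum>t\<in>{1..s}. p b t r) = 1)"

definition mu :: "nat \<Rightarrow> (nat \<Rightarrow> real) \<Rightarrow> (bool \<Rightarrow> nat \<Rightarrow> nat \<Rightarrow> real) \<Rightarrow> bool list \<Rightarrow> real" where
  "mu s p0 p x = (\<Sum>r\<in>PiE {0..length x} (\<lambda>_. {1..s}).
       p0 (r 0) * (\<Prod>i\<in>{1..length x}. p (x ! (i - 1)) (r i) (r (i - 1))))"

end

theory Submission
  imports Defs
begin


definition nrm :: "nat \<Rightarrow> (nat \<Rightarrow> real) \<Rightarrow> real" where
  "nrm s v = (\<Sum>r\<in>{1..s}. v r)"

definition stp :: "nat \<Rightarrow> (bool \<Rightarrow> nat \<Rightarrow> nat \<Rightarrow> real) \<Rightarrow> (nat \<Rightarrow> real) \<Rightarrow> bool \<Rightarrow> nat \<Rightarrow> real" where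
  "stp s p v b t = (\<Sum>r\<in>{1..s}. v r * p b t r)"

fun run :: "nat \<Rightarrow> (bool \<Rightarrow> nat \<Rightarrow> nat \<Rightarrow> real) \<Rightarrow> (nat \<Rightarrow> real) \<Rightarrow> bool list \<Rightarrow> nat \<Rightarrow> real" where
  "run s p v [] = v"
| "run s p v (b # y) = run s p (stp s p v b) y"

definition dl :: "nat \<Rightarrow> nat \<Rightarrow> real" where
  "dl r = (\<lambda>t. if t = r then 1 else 0)"

definition cc :: "nat \<Rightarrow> (bool \<Rightarrow> nat \<Rightarrow> nat \<Rightarrow> real) \<Rightarrow> bool list \<Rightarrow> real" where
  "cc s p y = (\<Sum>r\<in>{1..s}. nrm s (run s p (dl r) y))"

lemma run_append: "run s p v (y @ z) = run s p (run s p v y) z"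
  by (induction y arbitrary: v) auto

locale src =
  fixes s :: nat and p :: "bool \<Rightarrow> nat \<Rightarrow> nat \<Rightarrow> real"
  assumes pnn: "\<And>b r t. r \<in> {1..s} \<Longrightarrow> t \<in> {1..s} \<Longrightarrow> p b t r \<ge> 0"
  and psum: "\<And>r. r \<in> {1..s} \<Longrightarrow> (\<Sum>b\<in>UNIV. \<Sum>t\<in>{1..s}. p b t r) = 1"
begin

definition nn :: "(nat \<Rightarrow> real) \<Rightarrow> bool" where
  "nn v \<longleftrightarrow> (\<forall>r\<in>{1..s}. v r \<ge> 0)"

lemma nn_stp: "nn v \<Longrightarrow> nn (stp s p v b)"
  unfolding nn_def stp_def by (auto intro!: sum_nonneg mult_nonneg_nonneg pnn)

lemma nn_run: "nn v \<Longrightarrow> nn (run s p v y)"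
  by (induction y arbitrary: v) (auto simp: nn_stp)

lemma nn_dl: "nn (dl r)"
  unfolding nn_def dl_def by auto

lemma nrm_nonneg: "nn v \<Longrightarrow> nrm s v \<ge> 0"
  unfolding nn_def nrm_def by (auto intro!: sum_nonneg)

lemma sum_b_nrm_stp: "(\<Sum>b\<in>UNIV. nrm s (stp s p v b)) = nrm s v"
proof -
  have "(\<Sum>b\<in>UNIV. nrm s (stp s p v b)) = (\<Sum>b\<in>UNIV. \<Sum>t\<in>{1..s}. \<Sum>r\<in>{1..s}. v r * p b t r)"
    unfolding nrm_def stp_def by simp
  also have "\<dots> = (\<Sum>b\<in>UNIV. \<Sum>r\<in>{1..s}. \<Sum>t\<in>{1..s}. v r * p b t r)"
    by (rule sum.cong[OF refl]) (rule sum.swap)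
  also have "\<dots> = (\<Sum>r\<in>{1..s}. \<Sum>b\<in>UNIV. \<Sum>t\<in>{1..s}. v r * p b t r)"
    by (rule sum.swap)
  also have "\<dots> = (\<Sum>r\<in>{1..s}. v r * (\<Sum>b\<in>UNIV. \<Sum>t\<in>{1..s}. p b t r))"
    by (simp add: sum_distrib_left)
  also have "\<dots> = nrm s v" unfolding nrm_def
  proof (intro sum.cong refl)
    fix r assume "r \<in> {1..s}"
    then show "v r * (\<Sum>b\<in>UNIV. \<Sum>t\<in>{1..s}. p b t r) = v r" using psum[of r] by simp
  qed
  finally show ?thesis .
qed

lemma nrm_stp_le: "nn v \<Longrightarrow> nrm s (stp s p v b) \<le> nrm s v"
proof -
  assume "nn v"
  have "nrm s (stp s p v b) \<le> (\<Sum>b\<in>UNIV. nrm s (stp s p v b))"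
    by (rule member_le_sum) (auto intro: nrm_nonneg nn_stp \<open>nn v\<close>)
  then show ?thesis by (simp add: sum_b_nrm_stp)
qed

lemma nrm_run_le: "nn v \<Longrightarrow> nrm s (run s p v y) \<le> nrm s v"
proof (induction y arbitrary: v)
  case (Cons b y)
  have "nrm s (run s p (stp s p v b) y) \<le> nrm s (stp s p v b)"
    using Cons.IH nn_stp Cons.prems by blast
  also have "\<dots> \<le> nrm s v" using nrm_stp_le Cons.prems by blast
  finally show ?case by simp
qed simp

lemma run_linear: "t \<in> {1..s} \<Longrightarrow> run s p v y t = (\<Sum>r\<in>{1..s}. v r * run s p (dl r) y t)"
proof (induction y arbitrary: v)
  case Nil
  have f1: "(\<Sum>r\<in>{1..s}. v r * dl r t) = (\<Sum>r\<in>{1..s}. if r = t then v r else 0)"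
    by (rule sum.cong) (auto simp: dl_def)
  have f2: "(\<Sum>r\<in>{1..s}. if r = t then v r else 0) = v t"
    apply (subst sum.delta) apply simp using Nil.prems by simp
  have e1: "run s p v [] t = v t" by (simp only: run.simps)
  have e2: "(\<Sum>r\<in>{1..s}. v r * run s p (dl r) [] t) = (\<Sum>r\<in>{1..s}. v r * dl r t)"
    by (simp only: run.simps)
  show ?case by (simp only: e1 e2 f1 f2)
next
  case (Cons b y)
  have "run s p v (b # y) t = (\<Sum>r'\<in>{1..s}. stp s p v b r' * run s p (dl r') y t)"
    using Cons.IH[of "stp s p v b", OF Cons.prems] by simp
  also have "\<dots> = (\<Sum>r'\<in>{1..s}. \<Sum>r\<in>{1..s}. v r * p b r' r * run s p (dl r') y t)"
    by (simp add: stp_def sum_distrib_right)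
  also have "\<dots> = (\<Sum>r\<in>{1..s}. \<Sum>r'\<in>{1..s}. v r * p b r' r * run s p (dl r') y t)"
    by (rule sum.swap)
  also have "\<dots> = (\<Sum>r\<in>{1..s}. v r * run s p (dl r) (b # y) t)"
  proof (rule sum.cong[OF refl])
    fix r assume r: "r \<in> {1..s}"
    have "stp s p (dl r) b r' = p b r' r" for r'
    proof -
      have "stp s p (dl r) b r' = (\<Sum>r''\<in>{1..s}. if r'' = r then p b r' r'' else 0)"
        unfolding stp_def by (rule sum.cong) (auto simp: dl_def)
      also have "\<dots> = p b r' r" apply (subst sum.delta) apply simp using r by simp
      finally show ?thesis .
    qed
    then have "run s p (dl r) (b # y) t = (\<Sum>r'\<in>{1..s}. p b r' r * run s p (dl r') y t)"
      by (subst run.simps, subst Cons.IH[of "stp s p (dl r) b", OF Cons.prems], simp only:)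
    then show "(\<Sum>r'\<in>{1..s}. v r * p b r' r * run s p (dl r') y t) = v r * run s p (dl r) (b # y) t"
      by (simp add: sum_distrib_left mult.assoc)
  qed
  finally show ?case .
qed

lemma cc_nonneg: "cc s p y \<ge> 0"
  unfolding cc_def by (auto intro!: sum_nonneg nrm_nonneg nn_run nn_dl)

lemma nrm_dl: "r \<in> {1..s} \<Longrightarrow> nrm s (dl r) = 1"
  unfolding nrm_def dl_def by simp

lemma cc_le: "cc s p y \<le> s"
proof -
  have "cc s p y \<le> (\<Sum>r\<in>{1..s}. 1)"
    unfolding cc_def
  proof (rule sum_mono)
    fix r assume "r \<in> {1..s}"
    then show "nrm s (run s p (dl r) y) \<le> 1"
      using nrm_run_le[OF nn_dl, of r y] nrm_dl[of r] by simp
  qed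
  then show ?thesis by simp
qed

lemma nrm_run_cc: assumes "nn v" shows "nrm s (run s p v z) \<le> nrm s v * cc s p z"
proof -
  have vle: "v r \<le> nrm s v" if "r \<in> {1..s}" for r
    unfolding nrm_def using assms that unfolding nn_def by (intro member_le_sum) auto
  have "nrm s (run s p v z) = (\<Sum>t\<in>{1..s}. \<Sum>r\<in>{1..s}. v r * run s p (dl r) z t)"
    unfolding nrm_def by (rule sum.cong[OF refl]) (rule run_linear)
  also have "\<dots> \<le> (\<Sum>t\<in>{1..s}. \<Sum>r\<in>{1..s}. nrm s v * run s p (dl r) z t)"
  proof (rule sum_mono, rule sum_mono)
    fix t r assume t: "t \<in> {1..s}" and r: "r \<in> {1..s}"
    have "run s p (dl r) z t \<ge> 0" using nn_run[OF nn_dl, of r z] t unfolding nn_def by blast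
    then show "v r * run s p (dl r) z t \<le> nrm s v * run s p (dl r) z t"
      by (rule mult_right_mono[OF vle[OF r]])
  qed
  also have "\<dots> = nrm s v * cc s p z"
    unfolding cc_def nrm_def by (simp add: sum_distrib_left) (rule sum.swap)
  finally show ?thesis .
qed

lemma sum_len_nrm: "nn v \<Longrightarrow> (\<Sum>z\<in>{z. length z = L}. nrm s (run s p v z)) = nrm s v"
proof (induction L arbitrary: v)
  case 0
  then show ?case by simp
next
  case (Suc L)
  let ?A = "{z::bool list. length z = L}"
  have eq: "{z. length z = Suc L} = (\<lambda>(b, z). b # z) ` (UNIV \<times> ?A)"
  proof
    show "{z. length z = Suc L} \<subseteq> (\<lambda>(b, z). b # z) ` (UNIV \<times> ?A)"
    proof
      fix z :: "bool list" assume "z \<in> {z. length z = Suc L}"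
      then obtain b z' where "z = b # z'" "length z' = L" by (cases z) auto
      then show "z \<in> (\<lambda>(b, z). b # z) ` (UNIV \<times> ?A)" by force
    qed
  qed auto
  have inj: "inj_on (\<lambda>(b, z). b # z) (UNIV \<times> ?A)"
    by (rule inj_onI) auto
  have "(\<Sum>z\<in>{z. length z = Suc L}. nrm s (run s p v z))
      = (\<Sum>x\<in>UNIV \<times> ?A. nrm s (run s p v ((\<lambda>(b, z). b # z) x)))"
    unfolding eq by (rule sum.reindex[OF inj, unfolded comp_def])
  also have "\<dots> = (\<Sum>x\<in>UNIV \<times> ?A. nrm s (run s p (stp s p v (fst x)) (snd x)))"
    by (rule sum.cong) (auto simp: case_prod_beta)
  also have "\<dots> = (\<Sum>b\<in>UNIV. \<Sum>z\<in>?A. nrm s (run s p (stp s p v b) z))"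
    by (rule sum.cartesian_product[symmetric, where B="?A" and A=UNIV and
          g="\<lambda>b z. nrm s (run s p (stp s p v b) z)", unfolded case_prod_beta])
  also have "\<dots> = (\<Sum>b\<in>UNIV. nrm s (stp s p v b))"
  proof (rule sum.cong[OF refl])
    fix b show "(\<Sum>z\<in>?A. nrm s (run s p (stp s p v b) z)) = nrm s (stp s p v b)"
      by (rule Suc.IH) (rule nn_stp[OF Suc.prems])
  qed
  also have "\<dots> = nrm s v" by (rule sum_b_nrm_stp)
  finally show ?case .
qed

lemma sum_len_cc: "(\<Sum>z\<in>{z. length z = L}. cc s p z) = s"
proof -
  have "(\<Sum>z\<in>{z. length z = L}. cc s p z) = (\<Sum>r\<in>{1..s}. \<Sum>z\<in>{z. length z = L}. nrm s (run s p (dl r) z))"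
    unfolding cc_def by (rule sum.swap)
  also have "\<dots> = (\<Sum>r\<in>{1..s}. 1)"
  proof (rule sum.cong[OF refl])
    fix r assume "r \<in> {1..s}"
    then show "(\<Sum>z\<in>{z. length z = L}. nrm s (run s p (dl r) z)) = 1"
      using sum_len_nrm[OF nn_dl, of r L] nrm_dl[of r] by simp
  qed
  finally show ?thesis by simp
qed


lemma run_ivl:
  assumes "nn v" "finite I" "\<forall>(a,L)\<in>I. 1 \<le> L \<and> a + L \<le> length x"
    "\<forall>(a,L)\<in>I. \<forall>(a',L')\<in>I. (a,L) \<noteq> (a',L') \<longrightarrow> a + L \<le> a' \<or> a' + L' \<le> a"
  shows "nrm s (run s p v x) \<le> nrm s v * (\<Prod>(a,L)\<in>I. cc s p (take L (drop a x)))"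
  using assms
proof (induction "length x" arbitrary: x v I rule: less_induct)
  case less
  note nnv = less.prems(1) and finI = less.prems(2) and bnd = less.prems(3) and dis = less.prems(4)
  show ?case
  proof (cases "\<exists>L. (0, L) \<in> I")
    case True
    then obtain L where L: "(0, L) \<in> I" by blast
    have L1: "1 \<le> L" and Lx: "L \<le> length x" using bnd L by auto
    define J where "J = I - {(0, L)}"
    have Jge: "L \<le> a" if "(a, L') \<in> J" for a L'
    proof -
      have "(a, L') \<in> I" "(a, L') \<noteq> (0, L)" "1 \<le> L'" using that bnd unfolding J_def by auto
      then show ?thesis using dis L by fastforce
    qed
    define sh where "sh = (\<lambda>(a::nat, L'::nat). (a - L, L'))"
    define I' where "I' = sh ` J"
    have inj: "inj_on sh J"
    proof (rule inj_onI)
      fix u w assume "u \<in> J" "w \<in> J" "sh u = sh w"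
      then show "u = w" using Jge unfolding sh_def
        by (cases u, cases w) fastforce
    qed
    define x' where "x' = drop L x"
    define v' where "v' = run s p v (take L x)"
    have nnv': "nn v'" unfolding v'_def by (rule nn_run[OF nnv])
    have lt: "length x' < length x" unfolding x'_def using L1 Lx by simp
    have finI': "finite I'" unfolding I'_def J_def using finI by simp
    have bnd': "\<forall>(a,L')\<in>I'. 1 \<le> L' \<and> a + L' \<le> length x'"
    proof
      fix u assume "u \<in> I'"
      then obtain a L' where u: "u = (a - L, L')" "(a, L') \<in> J" unfolding I'_def sh_def by auto
      then have "(a, L') \<in> I" "L \<le> a" using Jge unfolding J_def by auto
      then show "case u of (a, L') \<Rightarrow> 1 \<le> L' \<and> a + L' \<le> length x'"
        using bnd u unfolding x'_def by auto
    qed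
    have dis'': "c + L1 \<le> c' \<or> c' + L2 \<le> c"
      if h1: "(c, L1) \<in> I'" and h2: "(c', L2) \<in> I'" and h3: "(c, L1) \<noteq> (c', L2)" for c L1 c' L2
    proof -
      obtain a a' where u: "c = a - L" "(a, L1) \<in> J" and w: "c' = a' - L" "(a', L2) \<in> J"
        using h1 h2 unfolding I'_def sh_def by auto
      have ge: "L \<le> a" "L \<le> a'" using Jge u w by auto
      have inI: "(a, L1) \<in> I" "(a', L2) \<in> I" using u w unfolding J_def by auto
      have ne: "(a, L1) \<noteq> (a', L2)" using h3 u w by auto
      have "a + L1 \<le> a' \<or> a' + L2 \<le> a" using dis inI ne by fastforce
      then show ?thesis using u w ge by auto
    qed
    have dis': "\<forall>(a,L1)\<in>I'. \<forall>(a',L2)\<in>I'. (a,L1) \<noteq> (a',L2) \<longrightarrow> a + L1 \<le> a' \<or> a' + L2 \<le> a"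
      using dis'' by blast
    have IH: "nrm s (run s p v' x') \<le> nrm s v' * (\<Prod>(a,L')\<in>I'. cc s p (take L' (drop a x')))"
      using less.hyps[OF lt nnv' finI' bnd' dis'] .
    have prodI': "(\<Prod>(a,L')\<in>I'. cc s p (take L' (drop a x'))) = (\<Prod>(a,L')\<in>J. cc s p (take L' (drop a x)))"
      unfolding I'_def
    proof (subst prod.reindex[OF inj], rule prod.cong[OF refl])
      fix u assume "u \<in> J"
      then obtain a L' where u: "u = (a, L')" "(a, L') \<in> J" by (cases u) auto
      then have "L \<le> a" using Jge by auto
      then show "((\<lambda>(a, L'). cc s p (take L' (drop a x'))) \<circ> sh) u = (case u of (a, L') \<Rightarrow> cc s p (take L' (drop a x)))"
        using u unfolding sh_def x'_def by simp
    qed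
    have prodI: "(\<Prod>(a,L')\<in>I. cc s p (take L' (drop a x))) = cc s p (take L x) * (\<Prod>(a,L')\<in>J. cc s p (take L' (drop a x)))"
      unfolding J_def using L finI by (simp add: prod.remove)
    have Pnn: "(\<Prod>(a,L')\<in>J. cc s p (take L' (drop a x))) \<ge> 0"
      by (rule prod_nonneg) (auto simp: cc_nonneg)
    have xeq: "run s p v x = run s p v' x'"
      unfolding v'_def x'_def by (metis append_take_drop_id run_append)
    have "nrm s (run s p v x) \<le> nrm s v' * (\<Prod>(a,L')\<in>J. cc s p (take L' (drop a x)))"
      using IH prodI' xeq by simp
    also have "\<dots> \<le> (nrm s v * cc s p (take L x)) * (\<Prod>(a,L')\<in>J. cc s p (take L' (drop a x)))"
      by (rule mult_right_mono[OF _ Pnn]) (unfold v'_def, rule nrm_run_cc[OF nnv])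
    finally show ?thesis using prodI by (simp add: mult.assoc)
  next
    case False
    then have a1: "1 \<le> a" if "(a, L) \<in> I" for a L
      using that by (cases a) auto
    show ?thesis
    proof (cases x)
      case Nil
      then have "I = {}" using bnd by fastforce
      then show ?thesis using Nil by simp
    next
      case (Cons b x')
      define sh where "sh = (\<lambda>(a::nat, L'::nat). (a - 1, L'))"
      define I' where "I' = sh ` I"
      have inj: "inj_on sh I"
      proof (rule inj_onI)
        fix u w assume "u \<in> I" "w \<in> I" "sh u = sh w"
        then show "u = w" using a1 unfolding sh_def
          by (cases u, cases w) fastforce
      qed
      have nnv': "nn (stp s p v b)" by (rule nn_stp[OF nnv])
      have lt: "length x' < length x" using Cons by simp
      have finI': "finite I'" unfolding I'_def using finI by simp
      have bnd': "\<forall>(a,L')\<in>I'. 1 \<le> L' \<and> a + L' \<le> length x'"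
      proof
        fix u assume "u \<in> I'"
        then obtain a L' where u: "u = (a - 1, L')" "(a, L') \<in> I" unfolding I'_def sh_def by auto
        then show "case u of (a, L') \<Rightarrow> 1 \<le> L' \<and> a + L' \<le> length x'"
          using bnd a1[OF u(2)] Cons by auto
      qed
      have dis'': "c + L1 \<le> c' \<or> c' + L2 \<le> c"
        if h1: "(c, L1) \<in> I'" and h2: "(c', L2) \<in> I'" and h3: "(c, L1) \<noteq> (c', L2)" for c L1 c' L2
      proof -
        obtain a a' where u: "c = a - 1" "(a, L1) \<in> I" and w: "c' = a' - 1" "(a', L2) \<in> I"
          using h1 h2 unfolding I'_def sh_def by auto
        have ge: "1 \<le> a" "1 \<le> a'" using a1 u w by auto
        have ne: "(a, L1) \<noteq> (a', L2)" using h3 u w by auto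
        have "a + L1 \<le> a' \<or> a' + L2 \<le> a" using dis u w ne by fastforce
        then show ?thesis using u w ge by auto
      qed
      have dis': "\<forall>(a,L1)\<in>I'. \<forall>(a',L2)\<in>I'. (a,L1) \<noteq> (a',L2) \<longrightarrow> a + L1 \<le> a' \<or> a' + L2 \<le> a"
        using dis'' by blast
      have IH: "nrm s (run s p (stp s p v b) x') \<le> nrm s (stp s p v b) * (\<Prod>(a,L')\<in>I'. cc s p (take L' (drop a x')))"
        using less.hyps[OF _ nnv' finI' bnd' dis'] lt Cons by blast
      have prodI': "(\<Prod>(a,L')\<in>I'. cc s p (take L' (drop a x'))) = (\<Prod>(a,L')\<in>I. cc s p (take L' (drop a x)))"
        unfolding I'_def
      proof (subst prod.reindex[OF inj], rule prod.cong[OF refl])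
        fix u assume "u \<in> I"
        then obtain a L' where u: "u = (a, L')" "(a, L') \<in> I" by (cases u) auto
        then have "1 \<le> a" using a1 by auto
        then show "((\<lambda>(a, L'). cc s p (take L' (drop a x'))) \<circ> sh) u = (case u of (a, L') \<Rightarrow> cc s p (take L' (drop a x)))"
          using u Cons unfolding sh_def by (cases a) auto
      qed
      have Pnn: "(\<Prod>(a,L')\<in>I. cc s p (take L' (drop a x))) \<ge> 0"
        by (rule prod_nonneg) (auto simp: cc_nonneg)
      have "nrm s (run s p v x) \<le> nrm s (stp s p v b) * (\<Prod>(a,L')\<in>I. cc s p (take L' (drop a x)))"
        using IH prodI' Cons by simp
      also have "\<dots> \<le> nrm s v * (\<Prod>(a,L')\<in>I. cc s p (take L' (drop a x)))"
        by (rule mult_right_mono[OF nrm_stp_le[OF nnv] Pnn])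
      finally show ?thesis .
    qed
  qed
qed

end

lemma sum_PiE_ins:
  assumes "a \<notin> S" "finite S" "finite (B a)" "\<And>i. i \<in> S \<Longrightarrow> finite (B i)"
  shows "(\<Sum>r\<in>PiE (insert a S) B. f r) = (\<Sum>y\<in>B a. \<Sum>r\<in>PiE S B. f (r(a := y)))"
proof -
  have inj: "inj_on (\<lambda>(y, g). g(a := y)) (B a \<times> PiE S B)"
    using inj_combinator'[OF assms(1), of B] by (auto simp: inj_on_def)
  have "(\<Sum>r\<in>PiE (insert a S) B. f r) = (\<Sum>u\<in>B a \<times> PiE S B. f ((\<lambda>(y, g). g(a := y)) u))"
    unfolding PiE_insert_eq by (subst sum.reindex[OF inj]) (simp add: comp_def)
  also have "\<dots> = (\<Sum>y\<in>B a. \<Sum>r\<in>PiE S B. f (r(a := y)))"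
    unfolding sum.cartesian_product by (simp add: case_prod_unfold)
  finally show ?thesis .
qed

lemma pie_sum:
  fixes x :: "bool list" and g :: "nat \<Rightarrow> real"
  assumes "n \<le> length x"
  shows "(\<Sum>r\<in>PiE {0..n} (\<lambda>_. {1..s}). p0 (r 0) * (\<Prod>i\<in>{1..n}. p (x ! (i - 1)) (r i) (r (i - 1))) * g (r n))
       = (\<Sum>t\<in>{1..s}. run s p p0 (take n x) t * g t)"
  using assms
proof (induction n arbitrary: g)
  case 0
  have e: "{0..0::nat} = insert 0 {}" by simp
  show ?case unfolding e
    by (subst sum_PiE_ins) auto
next
  case (Suc n)
  have e: "{0..Suc n} = insert (Suc n) {0..n}" by auto
  have n: "n < length x" using Suc.prems by simp
  have pr: "(\<Prod>i\<in>{1..Suc n}. p (x ! (i - 1)) ((r(Suc n := y)) i) ((r(Suc n := y)) (i - 1)))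
      = (\<Prod>i\<in>{1..n}. p (x ! (i - 1)) (r i) (r (i - 1))) * p (x ! n) y (r n)" for r y
  proof -
    have "(\<Prod>i\<in>{1..Suc n}. p (x ! (i - 1)) ((r(Suc n := y)) i) ((r(Suc n := y)) (i - 1)))
        = (\<Prod>i\<in>{1..n}. p (x ! (i - 1)) ((r(Suc n := y)) i) ((r(Suc n := y)) (i - 1))) * p (x ! n) y (r n)"
      by (simp add: prod.cl_ivl_Suc)
    also have "(\<Prod>i\<in>{1..n}. p (x ! (i - 1)) ((r(Suc n := y)) i) ((r(Suc n := y)) (i - 1)))
        = (\<Prod>i\<in>{1..n}. p (x ! (i - 1)) (r i) (r (i - 1)))"
      by (rule prod.cong) auto
    finally show ?thesis .
  qed
  have "(\<Sum>r\<in>PiE {0..Suc n} (\<lambda>_. {1..s}). p0 (r 0) * (\<Prod>i\<in>{1..Suc n}. p (x ! (i - 1)) (r i) (r (i - 1))) * g (r (Suc n)))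
      = (\<Sum>y\<in>{1..s}. \<Sum>r\<in>PiE {0..n} (\<lambda>_. {1..s}). p0 (r 0) * ((\<Prod>i\<in>{1..n}. p (x ! (i - 1)) (r i) (r (i - 1))) * p (x ! n) y (r n)) * g y)"
    unfolding e
    apply (subst sum_PiE_ins)
        apply simp_all[4]
    apply (intro sum.cong refl)
    apply (simp only: pr)
    apply simp
    done
  also have "\<dots> = (\<Sum>r\<in>PiE {0..n} (\<lambda>_. {1..s}). \<Sum>y\<in>{1..s}. p0 (r 0) * (\<Prod>i\<in>{1..n}. p (x ! (i - 1)) (r i) (r (i - 1))) * (p (x ! n) y (r n) * g y))"
    by (subst sum.swap) (simp add: mult.assoc)
  also have "\<dots> = (\<Sum>r\<in>PiE {0..n} (\<lambda>_. {1..s}). p0 (r 0) * (\<Prod>i\<in>{1..n}. p (x ! (i - 1)) (r i) (r (i - 1))) * (\<Sum>y\<in>{1..s}. p (x ! n) y (r n) * g y))"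
    by (simp add: sum_distrib_left)
  also have "\<dots> = (\<Sum>t\<in>{1..s}. run s p p0 (take n x) t * (\<Sum>y\<in>{1..s}. p (x ! n) y t * g y))"
    using Suc.IH[of "\<lambda>t. \<Sum>y\<in>{1..s}. p (x ! n) y t * g y"] n by simp
  also have "\<dots> = (\<Sum>y\<in>{1..s}. (\<Sum>t\<in>{1..s}. run s p p0 (take n x) t * p (x ! n) y t) * g y)"
    by (simp add: sum_distrib_left sum_distrib_right mult.assoc) (rule sum.swap)
  also have "\<dots> = (\<Sum>y\<in>{1..s}. run s p p0 (take (Suc n) x) y * g y)"
    using n by (simp add: take_Suc_conv_app_nth run_append stp_def)
  finally show ?case .
qed

lemma mu_run: "mu s p0 p x = nrm s (run s p p0 x)"
  using pie_sum[of "length x" x p0 p "\<lambda>_. 1" s] unfolding mu_def nrm_def by simp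

lemma mu_ivl:
  assumes "is_source s p0 p" "finite I" "\<forall>(a,L)\<in>I. 1 \<le> L \<and> a + L \<le> length x"
    "\<forall>(a,L)\<in>I. \<forall>(a',L')\<in>I. (a,L) \<noteq> (a',L') \<longrightarrow> a + L \<le> a' \<or> a' + L' \<le> a"
  shows "mu s p0 p x \<le> (\<Prod>(a,L)\<in>I. cc s p (take L (drop a x)))"
proof -
  interpret src s p using assms(1) unfolding is_source_def by unfold_locales auto
  have nn0: "nn p0" using assms(1) unfolding is_source_def nn_def by auto
  have "nrm s p0 = 1" using assms(1) unfolding is_source_def nrm_def by auto
  then show ?thesis unfolding mu_run using run_ivl[OF nn0 assms(2-4)] by simp
qed


lemma length_rep[simp]: "length (rep j y) = j * length y"
  unfolding rep_def by (induction j) auto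

lemma rep_add: "rep (i + j) y = rep i y @ rep j y"
  unfolding rep_def by (simp add: replicate_add)

lemma rep_0[simp]: "rep 0 y = []" and rep_1[simp]: "rep 1 y = y" and rep_Suc0[simp]: "rep (Suc 0) y = y"
  unfolding rep_def by auto

lemma rep_pow_Suc: "rep (2 ^ Suc a) y = rep (2 ^ a) y @ rep (2 ^ a) y"
  by (simp add: rep_add[symmetric] mult_2)

definition prim :: "bool list \<Rightarrow> bool" where
  "prim w \<longleftrightarrow> length w = 1 \<or> take (length w div 2) w \<noteq> drop (length w div 2) w"

lemma rep_pow_not_prim:
  assumes "w' \<noteq> []" "b > 0" shows "\<not> prim (rep (2 ^ b) w')"
proof -
  obtain b' where b: "b = Suc b'" using assms by (cases b) auto
  let ?r = "rep (2 ^ b') w'"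
  have eq: "rep (2 ^ b) w' = ?r @ ?r" unfolding b by (rule rep_pow_Suc)
  have lr: "length ?r \<ge> 1" using assms by (simp add: Suc_leI)
  have d: "length (?r @ ?r) div 2 = length ?r" by simp
  have n1: "length (?r @ ?r) \<noteq> 1" using lr by (simp only: length_append)
  show ?thesis unfolding prim_def eq using n1 d by simp
qed

lemma rep_inj:
  assumes "rep (2 ^ a) w = rep (2 ^ b) w'" "prim w" "prim w'" "w \<noteq> []" "w' \<noteq> []"
  shows "w = w' \<and> a = b"
  using assms
proof (induction a arbitrary: b)
  case 0
  show ?case
  proof (cases b)
    case 0 then show ?thesis using "0.prems" by simp
  next
    case (Suc b')
    have np: "\<not> prim (rep (2 ^ b) w')" by (rule rep_pow_not_prim[OF "0.prems"(5)]) (simp add: Suc)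
    have we: "w = rep (2 ^ b) w'" using "0.prems"(1) by simp
    have "prim (rep (2 ^ b) w')" using "0.prems"(2) unfolding we .
    then show ?thesis using np by blast
  qed
next
  case (Suc a)
  show ?case
  proof (cases b)
    case 0
    have np: "\<not> prim (rep (2 ^ Suc a) w)" by (rule rep_pow_not_prim[OF Suc.prems(4)]) simp
    have we: "w' = rep (2 ^ Suc a) w" using Suc.prems(1) 0 by simp
    have "prim (rep (2 ^ Suc a) w)" using Suc.prems(3) unfolding we .
    then show ?thesis using np by blast
  next
    case (Suc b')
    have e: "rep (2 ^ a) w @ rep (2 ^ a) w = rep (2 ^ b') w' @ rep (2 ^ b') w'"
      using Suc.prems(1) unfolding \<open>b = Suc b'\<close> rep_pow_Suc .
    have "length (rep (2 ^ a) w) = length (rep (2 ^ b') w')"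
      using arg_cong[OF e, of length] by simp
    then have "rep (2 ^ a) w = rep (2 ^ b') w'" using e by simp
    then show ?thesis using Suc.IH[of b'] Suc.prems \<open>b = Suc b'\<close> by simp
  qed
qed

fun rdk :: "('a \<Rightarrow> 'b) \<Rightarrow> 'a list \<Rightarrow> 'a list" where
  "rdk f [] = []"
| "rdk f (a # l) = (if f a \<in> f ` set l then rdk f l else a # rdk f l)"

lemma map_rdk: "map f (rdk f l) = remdups (map f l)"
  by (induction l) auto

lemma set_rdk: "set (rdk f l) \<subseteq> set l"
  by (induction l) auto

lemma sorted_rdk: "sorted_wrt R l \<Longrightarrow> sorted_wrt R (rdk f l)"
  by (induction l) (use set_rdk in fastforce)+

lemma distinct_rdk: "distinct l \<Longrightarrow> distinct (rdk f l)"
  by (induction l) (use set_rdk in fastforce)+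

definition key :: "nat \<times> nat \<times> nat \<Rightarrow> nat \<times> nat" where
  "key e = (fst e, fst (snd e))"

definition pos :: "nat \<times> nat \<times> nat \<Rightarrow> nat" where
  "pos e = snd (snd e)"

definition prepl :: "graph \<Rightarrow> nat \<Rightarrow> nat \<times> nat \<times> nat \<Rightarrow> (nat \<times> nat \<times> nat) list" where
  "prepl G h e = (case e of (m, q, a) \<Rightarrow>
     if q > 1 then [(m, q - 1, a)]
     else [(succ0 G m, lev G (succ0 G m) - lev G m, a), (succ1 G m, lev G (succ1 G m) - lev G m, a + 2 ^ h)])"

fun PS :: "graph \<Rightarrow> nat \<Rightarrow> nat \<Rightarrow> (nat \<times> nat \<times> nat) list" where
  "PS G k 0 = [(root G, 1, 0)]"
| "PS G k (Suc j) = concat (map (prepl G (k - Suc j)) (rdk key (PS G k j)))"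

lemma map_key_prepl: "map key (prepl G h e) = repl G (key e)"
  unfolding prepl_def repl_def key_def by (cases e) auto

lemma map_key_PS: "map key (PS G k j) = Sseq G j"
proof (induction j)
  case 0 then show ?case by (simp add: key_def)
next
  case (Suc j)
  have "map key (PS G k (Suc j)) = concat (map (\<lambda>e. map key (prepl G (k - Suc j) e)) (rdk key (PS G k j)))"
    by (simp add: map_concat comp_def)
  also have "\<dots> = concat (map (repl G) (map key (rdk key (PS G k j))))"
    by (simp add: map_key_prepl comp_def)
  also have "\<dots> = Sseq G (Suc j)"
    by (simp add: map_rdk Suc nextS_def)
  finally show ?case .
qed

definition blk :: "graph \<Rightarrow> nat \<times> nat \<Rightarrow> bool list" where
  "blk G a = rep (2 ^ (snd a - 1)) (phi G (fst a))"

lemma aligned_le: "(L::nat) dvd a \<Longrightarrow> L dvd b \<Longrightarrow> a < b \<Longrightarrow> a + L \<le> b"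
  by (elim dvdE) (metis add.commute less_mult_imp_div_less mult.commute mult_Suc_right
      nonzero_mult_div_cancel_left not_less_eq_eq Suc_leI add_mult_distrib2 mult_le_mono2 zero_less_iff_neq_zero
      mult_0 less_nat_zero_code)


lemma sorted_concat_map:
  assumes "sorted_wrt (\<lambda>e e'. pos e < pos e') R" "\<forall>e\<in>set R. (L::nat) dvd pos e"
    "\<forall>e\<in>set R. \<forall>e'\<in>set (f e). pos e \<le> pos e' \<and> pos e' < pos e + L"
    "\<forall>e\<in>set R. sorted_wrt (\<lambda>e e'. pos e < pos e') (f e)"
  shows "sorted_wrt (\<lambda>e e'. pos e < pos e') (concat (map f R))"
  using assms
proof (induction R)
  case Nil then show ?case by simp
next
  case (Cons e R)
  have rest: "sorted_wrt (\<lambda>e e'. pos e < pos e') (concat (map f R))"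
    using Cons by simp
  have cross: "pos u < pos w" if u: "u \<in> set (f e)" and w: "w \<in> set (concat (map f R))" for u w
  proof -
    obtain e2 where e2: "e2 \<in> set R" "w \<in> set (f e2)" using w by auto
    have "pos e < pos e2" using Cons.prems(1) e2 by simp
    moreover have "L dvd pos e" "L dvd pos e2" using Cons.prems(2) e2 by auto
    ultimately have "pos e + L \<le> pos e2" by (rule aligned_le[rotated 2])
    moreover have "pos u < pos e + L" using Cons.prems(3) u by simp
    moreover have "pos e2 \<le> pos w" using Cons.prems(3) e2 by auto
    ultimately show ?thesis by simp
  qed
  show ?case using rest cross Cons.prems(4) by (simp add: sorted_wrt_append)
qed

locale bdd =
  fixes G :: graph and x :: "bool list" and k :: nat
  assumes star: "in_calG_star G" and phx: "phi G (root G) = x" and lx: "length x = 2 ^ k"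
begin

abbreviation "TT \<equiv> lev G (term0 G)"

lemma calG: "in_calG G" using star unfolding in_calG_star_def by simp
lemma injphi: "inj_on (phi G) (verts G)" using star unfolding in_calG_star_def by simp
lemma finV: "finite (verts G)" using calG unfolding in_calG_def by simp
lemma rootV: "root G \<in> verts G" using calG unfolding in_calG_def by simp
lemma t0V: "term0 G \<in> verts G" using calG unfolding in_calG_def by simp
lemma t1V: "term1 G \<in> verts G" using calG unfolding in_calG_def by simp
lemma t01: "term0 G \<noteq> term1 G" using calG unfolding in_calG_def by simp
lemma rt0: "root G \<noteq> term0 G" using calG unfolding in_calG_def by simp
lemma rt1: "root G \<noteq> term1 G" using calG unfolding in_calG_def by simp
lemma succV: "v \<in> nonterms G \<Longrightarrow> succ0 G v \<in> verts G \<and> succ1 G v \<in> verts G \<and> succ0 G v \<noteq> succ1 G v"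
  using calG unfolding in_calG_def by blast
lemma levroot: "lev G (root G) = 1" using calG unfolding in_calG_def by simp
lemma levT1: "lev G (term1 G) = TT" using calG unfolding in_calG_def by simp
lemma levinc: "v \<in> nonterms G \<Longrightarrow> lev G v < lev G (succ0 G v) \<and> lev G v < lev G (succ1 G v)"
  using calG unfolding in_calG_def by blast
lemma nonterms_iff: "v \<in> nonterms G \<longleftrightarrow> v \<in> verts G \<and> v \<noteq> term0 G \<and> v \<noteq> term1 G"
  unfolding nonterms_def by auto

lemma lev_le_T: assumes "v \<in> verts G" shows "lev G v \<le> TT"
proof -
  let ?S = "lev G ` verts G"
  have fin: "finite ?S" using finV by simp
  have ne: "?S \<noteq> {}" using rootV by auto
  obtain w where w: "w \<in> verts G" "lev G w = Max ?S" using Max_in[OF fin ne] by auto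
  have "w \<notin> nonterms G"
  proof
    assume "w \<in> nonterms G"
    then have "succ0 G w \<in> verts G" "lev G w < lev G (succ0 G w)" using succV levinc by auto
    then show False using w Max_ge[OF fin] by force
  qed
  then have "lev G w = TT" using w(1) nonterms_iff levT1 by auto
  then show ?thesis using Max_ge[OF fin] assms w by force
qed

lemma lev_lt_T: "v \<in> nonterms G \<Longrightarrow> lev G v < TT"
  using levinc succV lev_le_T by (meson order_less_le_trans)

definition rk :: "nat \<Rightarrow> nat" where
  "rk v = card {u \<in> verts G. lev G v < lev G u}"

lemma rk_succ: assumes "v \<in> nonterms G"
  shows "rk (succ0 G v) < rk v" "rk (succ1 G v) < rk v"
proof -
  have fin: "finite {u \<in> verts G. lev G v < lev G u}" using finV by simp
  have "{u \<in> verts G. lev G (succ0 G v) < lev G u} \<subset> {u \<in> verts G. lev G v < lev G u}"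
    using succV[OF assms] levinc[OF assms] by auto
  then show "rk (succ0 G v) < rk v" unfolding rk_def by (rule psubset_card_mono[OF fin])
  have "{u \<in> verts G. lev G (succ1 G v) < lev G u} \<subset> {u \<in> verts G. lev G v < lev G u}"
    using succV[OF assms] levinc[OF assms] by auto
  then show "rk (succ1 G v) < rk v" unfolding rk_def by (rule psubset_card_mono[OF fin])
qed

lemma rk_lt_card: assumes "v \<in> verts G" shows "rk v < card (verts G)"
proof -
  have "{u \<in> verts G. lev G v < lev G u} \<subset> verts G" using assms by auto
  then show ?thesis unfolding rk_def by (rule psubset_card_mono[OF finV])
qed

lemma term_cases: "v \<in> verts G \<Longrightarrow> v \<notin> nonterms G \<Longrightarrow> v = term0 G \<or> v = term1 G"
  using nonterms_iff by auto

lemma fuel: "v \<in> verts G \<Longrightarrow> rk v \<le> f \<Longrightarrow> rk v \<le> g \<Longrightarrow> phi_fuel f G v = phi_fuel g G v"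
proof (induction f arbitrary: v g)
  case 0
  then have "v \<notin> nonterms G" using rk_succ by fastforce
  then have vt: "v = term0 G \<or> v = term1 G" using term_cases 0 by blast
  show ?case using vt t01 by (cases g) auto
next
  case (Suc f)
  show ?case
  proof (cases "v \<in> nonterms G")
    case False
    then have vt: "v = term0 G \<or> v = term1 G" using term_cases Suc by blast
    show ?thesis using vt t01 by (cases g) auto
  next
    case True
    have r0: "rk (succ0 G v) < rk v" and r1: "rk (succ1 G v) < rk v" using rk_succ[OF True] by auto
    obtain g' where g: "g = Suc g'" using Suc.prems r0 by (cases g) auto
    have v: "v \<noteq> term0 G" "v \<noteq> term1 G" using True nonterms_iff by auto
    have s: "succ0 G v \<in> verts G" "succ1 G v \<in> verts G" using succV[OF True] by auto
    have "phi_fuel f G (succ0 G v) = phi_fuel g' G (succ0 G v)"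
      using Suc.IH[OF s(1)] Suc.prems r0 g by simp
    moreover have "phi_fuel f G (succ1 G v) = phi_fuel g' G (succ1 G v)"
      using Suc.IH[OF s(2)] Suc.prems r1 g by simp
    ultimately show ?thesis using v g by simp
  qed
qed

lemma phi_fuel_eq: "v \<in> verts G \<Longrightarrow> rk v \<le> f \<Longrightarrow> phi_fuel f G v = phi G v"
  unfolding phi_def using fuel rk_lt_card by (meson less_imp_le)

lemma phi_nt: assumes "v \<in> nonterms G"
  shows "phi G v = rep (2 ^ (lev G (succ0 G v) - lev G v - 1)) (phi G (succ0 G v))
                 @ rep (2 ^ (lev G (succ1 G v) - lev G v - 1)) (phi G (succ1 G v))"
proof -
  have vV: "v \<in> verts G" using assms nonterms_iff by auto
  obtain c where c: "card (verts G) = Suc c" using rk_lt_card[OF vV] by (cases "card (verts G)") auto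
  have v: "v \<noteq> term0 G" "v \<noteq> term1 G" using assms nonterms_iff by auto
  have s: "succ0 G v \<in> verts G" "succ1 G v \<in> verts G" using succV[OF assms] by auto
  have r: "rk (succ0 G v) \<le> c" "rk (succ1 G v) \<le> c"
    using rk_succ[OF assms] rk_lt_card[OF vV] c by auto
  have "phi G v = phi_fuel (Suc c) G v" unfolding phi_def c ..
  then show ?thesis using v phi_fuel_eq[OF s(1) r(1)] phi_fuel_eq[OF s(2) r(2)] by simp
qed

lemma phi_t0: "phi G (term0 G) = [False]"
proof -
  obtain c where c: "card (verts G) = Suc c" using rk_lt_card[OF t0V] by (cases "card (verts G)") auto
  show ?thesis unfolding phi_def c by simp
qed

lemma phi_t1: "phi G (term1 G) = [True]"
proof -
  obtain c where c: "card (verts G) = Suc c" using rk_lt_card[OF t1V] by (cases "card (verts G)") auto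
  show ?thesis unfolding phi_def c using t01 by simp
qed

lemma len_phi: "v \<in> verts G \<Longrightarrow> length (phi G v) = 2 ^ (TT - lev G v)"
proof (induction "rk v" arbitrary: v rule: less_induct)
  case less
  show ?case
  proof (cases "v \<in> nonterms G")
    case False
    then have "v = term0 G \<or> v = term1 G" using term_cases less.prems by blast
    then show ?thesis using phi_t0 phi_t1 levT1 by auto
  next
    case True
    let ?s0 = "succ0 G v" and ?s1 = "succ1 G v"
    have s: "?s0 \<in> verts G" "?s1 \<in> verts G" using succV[OF True] by auto
    have l0: "length (phi G ?s0) = 2 ^ (TT - lev G ?s0)" using less.hyps[OF rk_succ(1)[OF True] s(1)] .
    have l1: "length (phi G ?s1) = 2 ^ (TT - lev G ?s1)" using less.hyps[OF rk_succ(2)[OF True] s(2)] .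
    have i: "lev G v < lev G ?s0" "lev G v < lev G ?s1" using levinc[OF True] by auto
    have le: "lev G ?s0 \<le> TT" "lev G ?s1 \<le> TT" using lev_le_T s by auto
    have e0: "2 ^ (lev G ?s0 - lev G v - 1) * 2 ^ (TT - lev G ?s0) = (2::nat) ^ (TT - lev G v - 1)"
      using i le by (simp add: power_add[symmetric])
    have e1: "2 ^ (lev G ?s1 - lev G v - 1) * 2 ^ (TT - lev G ?s1) = (2::nat) ^ (TT - lev G v - 1)"
      using i le by (simp add: power_add[symmetric])
    have d: "TT - lev G v = Suc (TT - lev G v - 1)" using i le by simp
    have "length (phi G v) = 2 ^ (TT - lev G v - 1) + 2 ^ (TT - lev G v - 1)"
      unfolding phi_nt[OF True] using l0 l1 e0 e1 by simp
    also have "\<dots> = 2 ^ (TT - lev G v)" by (subst d) simp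
    finally show ?thesis .
  qed
qed

lemma phi_ne: "v \<in> verts G \<Longrightarrow> phi G v \<noteq> []"
  using len_phi by fastforce

lemma root_nt: "root G \<in> nonterms G" using rootV rt0 rt1 nonterms_iff by auto

lemma TT_eq: "TT = Suc k"
proof -
  have "2 ^ (TT - 1) = (2::nat) ^ k" using len_phi[OF rootV] phx lx levroot by simp
  then have "TT - 1 = k" by simp
  moreover have "1 < TT" using lev_lt_T[OF root_nt] levroot by simp
  ultimately show ?thesis by simp
qed

lemma prim_phi: "v \<in> verts G \<Longrightarrow> prim (phi G v)"
proof (induction "rk v" arbitrary: v rule: less_induct)
  case less
  show ?case
  proof (cases "v \<in> nonterms G")
    case False
    then have "v = term0 G \<or> v = term1 G" using term_cases less.prems by blast
    then show ?thesis using phi_t0 phi_t1 unfolding prim_def by auto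
  next
    case True
    let ?s0 = "succ0 G v" and ?s1 = "succ1 G v"
    let ?A = "rep (2 ^ (lev G ?s0 - lev G v - 1)) (phi G ?s0)"
    let ?B = "rep (2 ^ (lev G ?s1 - lev G v - 1)) (phi G ?s1)"
    have s: "?s0 \<in> verts G" "?s1 \<in> verts G" "?s0 \<noteq> ?s1" using succV[OF True] by auto
    have p0: "prim (phi G ?s0)" using less.hyps[OF rk_succ(1)[OF True] s(1)] .
    have p1: "prim (phi G ?s1)" using less.hyps[OF rk_succ(2)[OF True] s(2)] .
    have i: "lev G v < lev G ?s0" "lev G v < lev G ?s1" using levinc[OF True] by auto
    have le: "lev G ?s0 \<le> TT" "lev G ?s1 \<le> TT" using lev_le_T s by auto
    have lA: "length ?A = 2 ^ (TT - lev G v - 1)"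
      using len_phi[OF s(1)] i le by (simp add: power_add[symmetric])
    have lB: "length ?B = 2 ^ (TT - lev G v - 1)"
      using len_phi[OF s(2)] i le by (simp add: power_add[symmetric])
    have hv: "length (phi G v) div 2 = length ?A" unfolding phi_nt[OF True] using lA lB by simp
    have "?A \<noteq> ?B"
    proof
      assume "?A = ?B"
      then have "phi G ?s0 = phi G ?s1" using rep_inj p0 p1 phi_ne s by blast
      then show False using injphi s unfolding inj_on_def by blast
    qed
    then show ?thesis unfolding prim_def hv unfolding phi_nt[OF True] by simp
  qed
qed

lemma blk_inj:
  assumes "m \<in> verts G" "m' \<in> verts G" "lev G m = j + q" "lev G m' = j + q'" "1 \<le> q" "1 \<le> q'"
    "blk G (m, q) = blk G (m', q')"
  shows "(m, q) = (m', q')"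
proof -
  have "phi G m = phi G m'"
    using rep_inj[of "q - 1" "phi G m" "q' - 1" "phi G m'"] assms prim_phi phi_ne
    unfolding blk_def by auto
  then have "m = m'" using injphi assms(1,2) unfolding inj_on_def by blast
  then show ?thesis using assms by simp
qed

lemma len_blk:
  assumes "m \<in> verts G" "lev G m = j + q" "1 \<le> q"
  shows "length (blk G (m, q)) = 2 ^ (k - j)"
proof -
  have "lev G m \<le> Suc k" using lev_le_T[OF assms(1)] TT_eq by simp
  then have "q - 1 + (TT - lev G m) = k - j" using assms TT_eq by simp
  then show ?thesis unfolding blk_def using len_phi[OF assms(1)] by (simp add: power_add[symmetric])
qed

end


lemma sorted_pos_distinct: "sorted_wrt (\<lambda>e e'. pos e < pos e') l \<Longrightarrow> distinct (map pos l)"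
  by (induction l) auto

lemma sum_list_count_real:
  fixes f :: "'a \<Rightarrow> real"
  shows "sum_list (map f xs) = (\<Sum>y\<in>set xs. real (count_list xs y) * f y)"
proof (induction xs)
  case Nil then show ?case by simp
next
  case (Cons x xs)
  show ?case
  proof (cases "x \<in> set xs")
    case True
    have "(\<Sum>y\<in>set (x # xs). real (count_list (x # xs) y) * f y)
        = (\<Sum>y\<in>set xs. real (count_list xs y) * f y + (if y = x then f y else 0))"
      using True by (intro sum.cong) (auto simp: algebra_simps)
    also have "\<dots> = (\<Sum>y\<in>set xs. real (count_list xs y) * f y) + f x"
      using True by (simp add: sum.distrib sum.delta')
    finally show ?thesis using Cons by simp
  next
    case False
    have "(\<Sum>y\<in>set (x # xs). real (count_list (x # xs) y) * f y)
        = real (count_list (x # xs) x) * f x + (\<Sum>y\<in>set xs. real (count_list (x # xs) y) * f y)"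
      using False by simp
    also have "(\<Sum>y\<in>set xs. real (count_list (x # xs) y) * f y) = (\<Sum>y\<in>set xs. real (count_list xs y) * f y)"
      using False by (intro sum.cong) auto
    finally show ?thesis using Cons False by (simp add: count_list_0_iff)
  qed
qed

context bdd begin

definition inv :: "nat \<Rightarrow> nat \<times> nat \<times> nat \<Rightarrow> bool" where
  "inv j e \<longleftrightarrow> (case e of (m, q, a) \<Rightarrow> m \<in> verts G \<and> 1 \<le> q \<and> lev G m = j + q
     \<and> 2 ^ (k - j) dvd a \<and> a + 2 ^ (k - j) \<le> 2 ^ k \<and> take (2 ^ (k - j)) (drop a x) = blk G (m, q))"

lemma PS_Suc_elem:
  assumes "e \<in> set (PS G k (Suc j))"
  obtains e0 where "e0 \<in> set (rdk key (PS G k j))" "e \<in> set (prepl G (k - Suc j) e0)"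
  using assms by auto

lemma inv_PS: "j \<le> k \<Longrightarrow> e \<in> set (PS G k j) \<Longrightarrow> inv j e"
proof (induction j arbitrary: e)
  case 0
  then have e: "e = (root G, 1, 0)" by simp
  show ?case unfolding e inv_def blk_def using rootV levroot phx lx by simp
next
  case (Suc j)
  from Suc.prems(2) obtain e0 where e0R: "e0 \<in> set (rdk key (PS G k j))" and ee: "e \<in> set (prepl G (k - Suc j) e0)"
    by auto
  have e0: "e0 \<in> set (PS G k j)" by (rule subsetD[OF set_rdk e0R])
  obtain m q a where mqa: "e0 = (m, q, a)" by (cases e0) auto
  have iv: "inv j (m, q, a)" using Suc.IH[of e0] Suc.prems(1) e0 mqa by simp
  define h where "h = k - Suc j"
  have kj: "k - j = Suc h" using Suc.prems unfolding h_def by simp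
  have p2: "(2::nat) ^ (k - j) = 2 ^ h + 2 ^ h" unfolding kj by simp
  have mV: "m \<in> verts G" and q1: "1 \<le> q" and lm: "lev G m = j + q" and dv: "2 ^ (k - j) dvd a"
    and bd: "a + 2 ^ (k - j) \<le> 2 ^ k" and B: "take (2 ^ (k - j)) (drop a x) = blk G (m, q)"
    using iv unfolding inv_def by auto
  have tk1: "take (2 ^ h) (drop a x) = take (2 ^ h) (blk G (m, q))"
    unfolding B[symmetric] using p2 by simp
  have tk2: "take (2 ^ h) (drop (a + 2 ^ h) x) = drop (2 ^ h) (blk G (m, q))"
  proof -
    have "take (2 ^ h) (drop (a + 2 ^ h) x) = take (2 ^ h) (drop (2 ^ h) (drop a x))"
      by (simp add: add.commute)
    also have "\<dots> = drop (2 ^ h) (take (2 ^ h + 2 ^ h) (drop a x))" by (simp add: take_drop add.assoc)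
    also have "\<dots> = drop (2 ^ h) (blk G (m, q))" unfolding B[symmetric] p2 ..
    finally show ?thesis .
  qed
  have dvh: "2 ^ h dvd a" using dv p2 by (metis dvd_add_right_iff dvd_refl dvd_trans)
  have dvh2: "2 ^ h dvd a + 2 ^ h" using dvh by simp
  have ksj: "k - Suc j = h" unfolding h_def ..
  show ?case
  proof (cases "q > 1")
    case True
    then have e: "e = (m, q - 1, a)" using ee mqa unfolding prepl_def by simp
    obtain q' where q': "q - 1 = Suc q'" using True by (cases "q - 1") auto
    have bq: "blk G (m, q) = blk G (m, q - 1) @ blk G (m, q - 1)"
      unfolding blk_def using q' by (simp add: mult_2 rep_add)
    have lq: "length (blk G (m, q - 1)) = 2 ^ h"
      using len_blk[OF mV, of "Suc j" "q - 1"] lm True ksj by simp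
    have "take (2 ^ h) (drop a x) = blk G (m, q - 1)" unfolding tk1 bq using lq by simp
    then show ?thesis unfolding e inv_def ksj using mV True lm dvh bd p2 by auto
  next
    case False
    then have q: "q = 1" using q1 by simp
    then have e: "e = (succ0 G m, lev G (succ0 G m) - lev G m, a) \<or> e = (succ1 G m, lev G (succ1 G m) - lev G m, a + 2 ^ h)"
      using ee mqa unfolding prepl_def ksj by auto
    have "lev G m < TT" using lm q Suc.prems(1) TT_eq by simp
    then have "m \<noteq> term0 G" "m \<noteq> term1 G" using levT1 by auto
    then have mnt: "m \<in> nonterms G" using mV unfolding nonterms_iff by simp
    have s: "succ0 G m \<in> verts G" "succ1 G m \<in> verts G" using succV[OF mnt] by auto
    have i: "lev G m < lev G (succ0 G m)" "lev G m < lev G (succ1 G m)" using levinc[OF mnt] by auto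
    let ?A = "blk G (succ0 G m, lev G (succ0 G m) - lev G m)"
    let ?B = "blk G (succ1 G m, lev G (succ1 G m) - lev G m)"
    have phm: "blk G (m, q) = ?A @ ?B" unfolding blk_def q using phi_nt[OF mnt] by simp
    have lA: "length ?A = 2 ^ h"
      using len_blk[OF s(1), of "Suc j"] lm q i ksj by simp
    have tA: "take (2 ^ h) (drop a x) = ?A" unfolding tk1 phm using lA by simp
    have tB: "take (2 ^ h) (drop (a + 2 ^ h) x) = ?B" unfolding tk2 phm using lA by simp
    show ?thesis
      using e
    proof
      assume e: "e = (succ0 G m, lev G (succ0 G m) - lev G m, a)"
      show ?thesis unfolding e inv_def ksj using s i lm q dvh bd p2 tA by auto
    next
      assume e: "e = (succ1 G m, lev G (succ1 G m) - lev G m, a + 2 ^ h)"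
      show ?thesis unfolding e inv_def ksj using s i lm q dvh2 bd p2 tB by auto
    qed
  qed
qed

lemma inv_PS_key:
  assumes "j \<le> k" "e \<in> set (PS G k j)"
  shows "fst (key e) \<in> verts G" "1 \<le> snd (key e)" "lev G (fst (key e)) = j + snd (key e)"
    "2 ^ (k - j) dvd pos e" "pos e + 2 ^ (k - j) \<le> 2 ^ k"
    "take (2 ^ (k - j)) (drop (pos e) x) = blk G (key e)"
  using inv_PS[OF assms] unfolding inv_def key_def pos_def by (auto split: prod.splits)

lemma sorted_PS: "j \<le> k \<Longrightarrow> sorted_wrt (\<lambda>e e'. pos e < pos e') (PS G k j)"
proof (induction j)
  case 0 then show ?case by simp
next
  case (Suc j)
  define h where "h = k - Suc j"
  have kj: "k - j = Suc h" using Suc.prems unfolding h_def by simp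
  let ?R = "rdk key (PS G k j)"
  have sR: "sorted_wrt (\<lambda>e e'. pos e < pos e') ?R" using Suc by (intro sorted_rdk) simp
  have dR: "\<forall>e\<in>set ?R. 2 ^ (k - j) dvd pos e"
    using inv_PS_key(4)[of j] Suc.prems subsetD[OF set_rdk[of key "PS G k j"]] by simp
  have ch: "\<forall>e\<in>set ?R. \<forall>e'\<in>set (prepl G h e). pos e \<le> pos e' \<and> pos e' < pos e + 2 ^ (k - j)"
    unfolding kj prepl_def pos_def by (auto split: prod.splits)
  have sc: "\<forall>e\<in>set ?R. sorted_wrt (\<lambda>e e'. pos e < pos e') (prepl G h e)"
    unfolding prepl_def pos_def by (auto split: prod.splits)
  show ?case using sorted_concat_map[OF sR dR ch sc] unfolding h_def by simp
qed

lemma inj_pos: "j \<le> k \<Longrightarrow> inj_on pos (set (PS G k j))"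
  using sorted_pos_distinct[OF sorted_PS] distinct_map by blast

lemma distinct_PS: "j \<le> k \<Longrightarrow> distinct (PS G k j)"
  using sorted_pos_distinct[OF sorted_PS] distinct_map by blast

lemma disj_level:
  assumes "j \<le> k" "e \<in> set (PS G k j)" "e' \<in> set (PS G k j)" "e \<noteq> e'"
  shows "pos e + 2 ^ (k - j) \<le> pos e' \<or> pos e' + 2 ^ (k - j) \<le> pos e"
proof -
  have "pos e \<noteq> pos e'" using inj_pos[OF assms(1)] assms(2-4) unfolding inj_on_def by blast
  moreover have "2 ^ (k - j) dvd pos e" "2 ^ (k - j) dvd pos e'" using inv_PS_key(4) assms by auto
  ultimately show ?thesis using aligned_le by (metis nat_neq_iff)
qed

lemma nest1:
  assumes "j < k" "e' \<in> set (PS G k (Suc j))"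
  shows "\<exists>e\<in>set (rdk key (PS G k j)). pos e \<le> pos e' \<and> pos e' + 2 ^ (k - Suc j) \<le> pos e + 2 ^ (k - j)"
proof -
  obtain e0 where e0R: "e0 \<in> set (rdk key (PS G k j))" and ee: "e' \<in> set (prepl G (k - Suc j) e0)"
    by (rule PS_Suc_elem[OF assms(2)])
  have kj: "k - j = Suc (k - Suc j)" using assms by simp
  have "pos e0 \<le> pos e' \<and> pos e' + 2 ^ (k - Suc j) \<le> pos e0 + 2 ^ (k - j)"
    using ee unfolding kj prepl_def pos_def by (auto split: prod.splits if_splits)
  then show ?thesis using e0R by blast
qed

lemma nest:
  assumes "j < j'" "j' \<le> k" "e' \<in> set (PS G k j')"
  shows "\<exists>e\<in>set (rdk key (PS G k j)). pos e \<le> pos e' \<and> pos e' + 2 ^ (k - j') \<le> pos e + 2 ^ (k - j)"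
  using assms
proof (induction j' arbitrary: e')
  case 0 then show ?case by simp
next
  case (Suc j'')
  obtain g where gR: "g \<in> set (rdk key (PS G k j''))"
    and g: "pos g \<le> pos e'" "pos e' + 2 ^ (k - Suc j'') \<le> pos g + 2 ^ (k - j'')"
    using nest1[of j'' e'] Suc.prems by auto
  show ?case
  proof (cases "j'' = j")
    case True then show ?thesis using gR g by blast
  next
    case False
    have gP: "g \<in> set (PS G k j'')" by (rule subsetD[OF set_rdk gR])
    obtain f where "f \<in> set (rdk key (PS G k j))" "pos f \<le> pos g" "pos g + 2 ^ (k - j'') \<le> pos f + 2 ^ (k - j)"
      using Suc.IH[OF _ _ gP] Suc.prems False by auto
    then show ?thesis using g by (intro bexI[of _ f]) auto
  qed
qed

definition NF :: "nat \<Rightarrow> (nat \<times> nat \<times> nat) set" where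
  "NF j = set (PS G k j) - set (rdk key (PS G k j))"

lemma NF_disj:
  assumes "j \<le> j'" "j' \<le> k" "e \<in> NF j" "e' \<in> NF j'" "(j, e) \<noteq> (j', e')"
  shows "pos e + 2 ^ (k - j) \<le> pos e' \<or> pos e' + 2 ^ (k - j') \<le> pos e"
proof (cases "j = j'")
  case True
  then show ?thesis using disj_level[of j e e'] assms unfolding NF_def by auto
next
  case False
  then have lt: "j < j'" using assms by simp
  obtain f where f: "f \<in> set (rdk key (PS G k j))" "pos f \<le> pos e'" "pos e' + 2 ^ (k - j') \<le> pos f + 2 ^ (k - j)"
    using nest[OF lt assms(2), of e'] assms(4) unfolding NF_def by auto
  have ef: "e \<noteq> f" using f(1) assms(3) unfolding NF_def by auto
  have "pos e + 2 ^ (k - j) \<le> pos f \<or> pos f + 2 ^ (k - j) \<le> pos e"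
    using disj_level[of j e f] ef subsetD[OF set_rdk f(1)] assms unfolding NF_def by auto
  then show ?thesis using f by auto
qed

definition IV :: "(nat \<times> nat) set" where
  "IV = (\<Union>j\<in>{1..k}. (\<lambda>e. (pos e, 2 ^ (k - j))) ` NF j)"

lemma finite_NF: "finite (NF j)" unfolding NF_def by simp

lemma IV_fin: "finite IV" unfolding IV_def using finite_NF by auto

lemma IV_bnd: "\<forall>(a, L)\<in>IV. 1 \<le> L \<and> a + L \<le> length x"
  unfolding IV_def NF_def using inv_PS_key(5) lx by fastforce

lemma IV_disj0:
  assumes "u \<in> IV" "w \<in> IV" "u \<noteq> w"
  shows "fst u + snd u \<le> fst w \<or> fst w + snd w \<le> fst u"
proof -
  obtain j e j' e' where je: "j \<in> {1..k}" "e \<in> NF j" "u = (pos e, 2 ^ (k - j))"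
    and je': "j' \<in> {1..k}" "e' \<in> NF j'" "w = (pos e', 2 ^ (k - j'))"
    using assms(1,2) unfolding IV_def by auto
  then have ne: "(j, e) \<noteq> (j', e')" using assms(3) by auto
  have "pos e + 2 ^ (k - j) \<le> pos e' \<or> pos e' + 2 ^ (k - j') \<le> pos e"
  proof (cases "j \<le> j'")
    case True then show ?thesis using NF_disj[OF True _ je(2) je'(2) ne] je' by auto
  next
    case False
    then show ?thesis using NF_disj[of j' j e' e] je je' ne by auto
  qed
  then show ?thesis using je je' by simp
qed

lemma IV_disj: "\<forall>(a, L)\<in>IV. \<forall>(a', L')\<in>IV. (a, L) \<noteq> (a', L') \<longrightarrow> a + L \<le> a' \<or> a' + L' \<le> a"
  using IV_disj0 by fastforce

lemma sum_NF:
  fixes F :: "nat \<times> nat \<Rightarrow> real"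
  assumes "j \<le> k"
  shows "(\<Sum>e\<in>NF j. F (key e)) = (\<Sum>a\<in>set (Sseq G j). (real (count_list (Sseq G j) a) - 1) * F a)"
proof -
  let ?l = "PS G k j" and ?R = "rdk key (PS G k j)"
  have dl: "distinct ?l" using distinct_PS[OF assms] .
  have dR: "distinct ?R" using distinct_rdk[OF dl] .
  have sub: "set ?R \<subseteq> set ?l" by (rule set_rdk)
  have s1: "(\<Sum>e\<in>set ?l. F (key e)) = (\<Sum>a\<in>set (Sseq G j). real (count_list (Sseq G j) a) * F a)"
  proof -
    have "(\<Sum>e\<in>set ?l. F (key e)) = sum_list (map (F \<circ> key) ?l)"
      using sum_list_distinct_conv_sum_set[OF dl, of "F \<circ> key"] by simp
    also have "\<dots> = sum_list (map F (Sseq G j))" by (subst map_key_PS[symmetric]) (simp add: map_map)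
    also have "\<dots> = (\<Sum>a\<in>set (Sseq G j). real (count_list (Sseq G j) a) * F a)"
      by (rule sum_list_count_real)
    finally show ?thesis .
  qed
  have s2: "(\<Sum>e\<in>set ?R. F (key e)) = (\<Sum>a\<in>set (Sseq G j). F a)"
  proof -
    have "(\<Sum>e\<in>set ?R. F (key e)) = sum_list (map (F \<circ> key) ?R)"
      using sum_list_distinct_conv_sum_set[OF dR, of "F \<circ> key"] by simp
    also have "\<dots> = sum_list (map F (map key ?R))" by simp
    also have "\<dots> = sum_list (map F (remdups (Sseq G j)))" by (simp add: map_rdk map_key_PS)
    also have "\<dots> = (\<Sum>a\<in>set (Sseq G j). F a)" by (simp add: sum_list_distinct_conv_sum_set)
    finally show ?thesis .
  qed
  have "(\<Sum>e\<in>NF j. F (key e)) = (\<Sum>e\<in>set ?l. F (key e)) - (\<Sum>e\<in>set ?R. F (key e))"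
    unfolding NF_def by (rule sum_diff[OF _ sub]) simp
  also have "\<dots> = (\<Sum>a\<in>set (Sseq G j). (real (count_list (Sseq G j) a) - 1) * F a)"
    unfolding s1 s2 by (simp add: sum_subtractf[symmetric] left_diff_distrib)
  finally show ?thesis .
qed

lemma card_NF:
  assumes "j \<le> k"
  shows "card (NF j) = length (Sseq G j) - card (set (Sseq G j))"
proof -
  let ?l = "PS G k j" and ?R = "rdk key (PS G k j)"
  have dl: "distinct ?l" using distinct_PS[OF assms] .
  have dR: "distinct ?R" using distinct_rdk[OF dl] .
  have sub: "set ?R \<subseteq> set ?l" by (rule set_rdk)
  have "card (NF j) = card (set ?l) - card (set ?R)" unfolding NF_def by (rule card_Diff_subset[OF _ sub]) simp
  also have "card (set ?l) = length (Sseq G j)" using distinct_card[OF dl] map_key_PS[of G k j]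
    by (metis length_map)
  also have "card (set ?R) = length (map key ?R)" using distinct_card[OF dR] by simp
  also have "\<dots> = card (set (Sseq G j))" by (simp add: map_rdk map_key_PS length_remdups_card_conv)
  finally show ?thesis .
qed

lemma IV_union_disj:
  "\<forall>j\<in>{1..k}. \<forall>j'\<in>{1..k}. j \<noteq> j' \<longrightarrow> ((\<lambda>e. (pos e, (2::nat) ^ (k - j))) ` NF j) \<inter> ((\<lambda>e. (pos e, (2::nat) ^ (k - j'))) ` NF j') = {}"
proof (intro ballI impI)
  fix j j' assume j: "j \<in> {1..k}" "j' \<in> {1..k}" "j \<noteq> j'"
  then have "(2::nat) ^ (k - j) \<noteq> 2 ^ (k - j')" by auto
  then show "((\<lambda>e. (pos e, (2::nat) ^ (k - j))) ` NF j) \<inter> ((\<lambda>e. (pos e, (2::nat) ^ (k - j'))) ` NF j') = {}" by auto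
qed

lemma inj_NF: "j \<le> k \<Longrightarrow> inj_on (\<lambda>e. (pos e, (2::nat) ^ (k - j))) (NF j)"
  using inj_pos unfolding NF_def inj_on_def by blast

lemma sum_IV:
  fixes g :: "bool list \<Rightarrow> real"
  shows "(\<Sum>(a, L)\<in>IV. g (take L (drop a x)))
    = (\<Sum>j\<in>{1..k}. \<Sum>a\<in>set (Sseq G j). (real (count_list (Sseq G j) a) - 1) * g (blk G a))"
proof -
  have "(\<Sum>(a, L)\<in>IV. g (take L (drop a x)))
      = (\<Sum>j\<in>{1..k}. \<Sum>u\<in>(\<lambda>e. (pos e, 2 ^ (k - j))) ` NF j. (case u of (a, L) \<Rightarrow> g (take L (drop a x))))"
    unfolding IV_def by (rule sum.UNION_disjoint) (use finite_NF IV_union_disj in auto)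
  also have "\<dots> = (\<Sum>j\<in>{1..k}. \<Sum>e\<in>NF j. g (blk G (key e)))"
  proof (rule sum.cong[OF refl])
    fix j assume j: "j \<in> {1..k}"
    have "(\<Sum>u\<in>(\<lambda>e. (pos e, 2 ^ (k - j))) ` NF j. (case u of (a, L) \<Rightarrow> g (take L (drop a x))))
        = (\<Sum>e\<in>NF j. g (take (2 ^ (k - j)) (drop (pos e) x)))"
      using j by (subst sum.reindex[OF inj_NF]) auto
    also have "\<dots> = (\<Sum>e\<in>NF j. g (blk G (key e)))"
      using j inv_PS_key(6) unfolding NF_def by (intro sum.cong refl) auto
    finally show "(\<Sum>u\<in>(\<lambda>e. (pos e, 2 ^ (k - j))) ` NF j. (case u of (a, L) \<Rightarrow> g (take L (drop a x))))
        = (\<Sum>e\<in>NF j. g (blk G (key e)))" .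
  qed
  also have "\<dots> = (\<Sum>j\<in>{1..k}. \<Sum>a\<in>set (Sseq G j). (real (count_list (Sseq G j) a) - 1) * g (blk G a))"
    by (intro sum.cong refl sum_NF[of _ "\<lambda>a. g (blk G a)"]) auto
  finally show ?thesis .
qed

lemma card_IV: "card IV = (\<Sum>j\<in>{1..k}. length (Sseq G j) - card (set (Sseq G j)))"
proof -
  have "card IV = (\<Sum>j\<in>{1..k}. card ((\<lambda>e. (pos e, (2::nat) ^ (k - j))) ` NF j))"
    unfolding IV_def by (rule card_UN_disjoint) (use finite_NF IV_union_disj in auto)
  also have "\<dots> = (\<Sum>j\<in>{1..k}. card (NF j))"
    by (intro sum.cong refl card_image inj_NF) auto
  also have "\<dots> = (\<Sum>j\<in>{1..k}. length (Sseq G j) - card (set (Sseq G j)))"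
    by (intro sum.cong refl card_NF) auto
  finally show ?thesis .
qed

end


lemma length_concat_map_le:
  "(\<forall>a\<in>set l. length (f a) \<le> c) \<Longrightarrow> length (concat (map f l)) \<le> c * length l"
  by (induction l) auto

lemma length_repl: "length (repl G a) \<le> 2"
  unfolding repl_def by (cases a) auto

lemma length_nextS: "length (nextS G prev) \<le> 2 * card (set prev)"
proof -
  have "length (nextS G prev) \<le> 2 * length (remdups prev)"
    unfolding nextS_def by (rule length_concat_map_le) (simp add: length_repl)
  then show ?thesis by (simp add: length_remdups_card_conv)
qed

lemma length_hatS: "length (hatS G prev) \<le> 2 * card (set prev)"
proof -
  have "length (hatS G prev) \<le> 2 * length (filter (\<lambda>a. snd a = 1) (remdups prev))"
    unfolding hatS_def by (rule length_concat_map_le) (simp add: length_repl)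
  also have "\<dots> \<le> 2 * length (remdups prev)" by simp
  finally show ?thesis by (simp add: length_remdups_card_conv)
qed

lemma count_concat_map: "count_list (concat (map f l)) a = sum_list (map (\<lambda>y. count_list (f y) a) l)"
  by (induction l) auto

lemma sum_list_filter_split:
  fixes g :: "'a \<Rightarrow> nat"
  shows "sum_list (map g l) = sum_list (map g (filter P l)) + sum_list (map g (filter (\<lambda>y. \<not> P y) l))"
  by (induction l) auto

lemma count_filter: "count_list (filter P xs) a = (if P a then count_list xs a else 0)"
  by (induction xs) auto

lemma count_nextS:
  "count_list (nextS G prev) a = count_list (hatS G prev) a
     + count_list (concat (map (repl G) (filter (\<lambda>a. \<not> snd a = 1) (remdups prev)))) a"
  unfolding nextS_def hatS_def count_concat_map
  by (rule sum_list_filter_split)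

lemma count_nextS_ge:
  assumes "(m, Suc q) \<in> set prev" "q \<noteq> 0"
  shows "count_list (hatS G prev) (m, q) + 1 \<le> count_list (nextS G prev) (m, q)"
proof -
  let ?l = "filter (\<lambda>a. \<not> snd a = 1) (remdups prev)"
  have mem: "(m, Suc q) \<in> set ?l" using assms by simp
  have r: "repl G (m, Suc q) = [(m, q)]" unfolding repl_def using assms(2) by simp
  have "count_list (repl G (m, Suc q)) (m, q) \<in> set (map (\<lambda>y. count_list (repl G y) (m, q)) ?l)"
    using mem by auto
  then have "count_list (repl G (m, Suc q)) (m, q) \<le> sum_list (map (\<lambda>y. count_list (repl G y) (m, q)) ?l)"
    by (rule member_le_sum_list) auto
  then have "1 \<le> count_list (concat (map (repl G) ?l)) (m, q)"
    unfolding count_concat_map r by simp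
  then show ?thesis unfolding count_nextS by simp
qed

lemma count_tilde_aux: "count_list (tilde_aux S u) a = (if a \<in> S then count_list u a else count_list u a - 1)"
  by (induction S u rule: tilde_aux.induct) auto

lemma count_tilde: "count_list (tilde u) a = count_list u a - 1"
  unfolding tilde_def by (simp add: count_tilde_aux)

lemma set_tilde: "set (tilde u) \<subseteq> set u"
proof
  fix a assume "a \<in> set (tilde u)"
  then have "count_list (tilde u) a \<noteq> 0" by (simp add: count_list_0_iff)
  then have "count_list u a \<noteq> 0" unfolding count_tilde by simp
  then show "a \<in> set u" by (simp add: count_list_0_iff)
qed

lemma key_count:
  assumes "snd a \<noteq> 0"
  shows "count_list (pi1 G prev) a + count_list (tilde (pi2 G prev)) a \<le> count_list (nextS G prev) a - 1"
proof -
  obtain m q where a: "a = (m, q)" by (cases a) auto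
  have q: "q \<noteq> 0" using assms a by simp
  have c1: "count_list (pi1 G prev) (m, q) = (if (m, Suc q) \<in> set prev then count_list (hatS G prev) (m, q) else 0)"
    unfolding pi1_def count_filter by simp
  have c2: "count_list (pi2 G prev) (m, q) = (if m \<notin> fst ` set prev then count_list (hatS G prev) (m, q) else 0)"
    unfolding pi2_def count_filter by simp
  have hn: "count_list (hatS G prev) (m, q) \<le> count_list (nextS G prev) (m, q)"
    unfolding count_nextS by simp
  show ?thesis
  proof (cases "(m, Suc q) \<in> set prev")
    case True
    then have "m \<in> fst ` set prev" by force
    then have "count_list (pi2 G prev) (m, q) = 0" using c2 by simp
    then show ?thesis using count_nextS_ge[OF True q, of G] c1 True a by (simp add: count_tilde)
  next
    case False
    then show ?thesis using c1 c2 hn a by (auto simp: count_tilde)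
  qed
qed

lemma Hent_count:
  "Hent u = (\<Sum>a\<in>set u. real (count_list u a) * (- log 2 (real (count_list u a) / real (length u))))"
proof -
  let ?h = "\<lambda>a. - log 2 (real (count_list u a) / real (length u))"
  have "Hent u = (\<Sum>t<length u. ?h (u ! t))" unfolding Hent_def ..
  also have "\<dots> = sum_list (map ?h u)"
    by (simp add: sum_list_sum_nth atLeast0LessThan)
  also have "\<dots> = (\<Sum>a\<in>set u. real (count_list u a) * ?h a)" by (rule sum_list_count_real)
  finally show ?thesis .
qed

lemma log2_le: "0 < y \<Longrightarrow> log 2 y \<le> (y - 1) / ln 2"
  unfolding log_def using ln_le_minus_one[of y] by (simp add: divide_right_mono)

lemma gibbs:
  fixes q :: "'a \<Rightarrow> real"
  assumes pos: "\<forall>a\<in>set u. q a > 0" and sm: "(\<Sum>a\<in>set u. q a) \<le> 1"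
  shows "Hent u \<le> (\<Sum>a\<in>set u. real (count_list u a) * (- log 2 (q a)))"
proof (cases "u = []")
  case True then show ?thesis by (simp add: Hent_def)
next
  case False
  define J where "J = real (length u)"
  have J: "J > 0" using False unfolding J_def by simp
  have cpos: "real (count_list u a) > 0" if "a \<in> set u" for a
    using that by (metis count_list_0_iff gr0I of_nat_0_less_iff)
  have pt: "real (count_list u a) * (- log 2 (real (count_list u a) / J)) - real (count_list u a) * (- log 2 (q a))
      \<le> (q a * J - real (count_list u a)) / ln 2" if a: "a \<in> set u" for a
  proof -
    let ?c = "real (count_list u a)"
    have c: "?c > 0" using cpos a .
    have qa: "q a > 0" using pos a by simp
    have "log 2 (q a) - log 2 (?c / J) = log 2 (q a * J / ?c)"
      using c qa J by (simp add: log_divide log_mult)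
    also have "\<dots> \<le> (q a * J / ?c - 1) / ln 2" by (rule log2_le) (use c qa J in simp)
    finally have "?c * (log 2 (q a) - log 2 (?c / J)) \<le> ?c * ((q a * J / ?c - 1) / ln 2)"
      by (rule mult_left_mono) (use c in auto)
    also have "\<dots> = (q a * J - ?c) / ln 2" using c by (simp add: field_simps)
    finally show ?thesis by (simp add: algebra_simps)
  qed
  have "Hent u - (\<Sum>a\<in>set u. real (count_list u a) * (- log 2 (q a)))
      = (\<Sum>a\<in>set u. real (count_list u a) * (- log 2 (real (count_list u a) / J)) - real (count_list u a) * (- log 2 (q a)))"
    unfolding Hent_count J_def sum_subtractf ..
  also have "\<dots> \<le> (\<Sum>a\<in>set u. (q a * J - real (count_list u a)) / ln 2)"
    by (rule sum_mono) (rule pt)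
  also have "\<dots> = (J * (\<Sum>a\<in>set u. q a) - (\<Sum>a\<in>set u. real (count_list u a))) / ln 2"
    by (simp add: sum_divide_distrib[symmetric] sum_subtractf sum_distrib_left mult.commute)
  also have "(\<Sum>a\<in>set u. real (count_list u a)) = J"
    unfolding J_def using sum_count_set[of u "set u"] by (simp flip: of_nat_sum)
  also have "(J * (\<Sum>a\<in>set u. q a) - J) / ln 2 \<le> 0"
    using sm J by (intro divide_nonpos_pos) (auto simp: mult_left_le)
  finally show ?thesis by simp
qed


lemma persist:
  assumes "(m, q) \<in> set (Sseq G i)" "1 < q"
  shows "(m, q - 1) \<in> set (Sseq G (Suc i))"
proof -
  have "repl G (m, q) = [(m, q - 1)]" unfolding repl_def using assms(2) by simp
  moreover have "(m, q) \<in> set (remdups (Sseq G i))" using assms(1) by simp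
  ultimately show ?thesis by (force simp: nextS_def)
qed

lemma persist_t:
  assumes "(m, q) \<in> set (Sseq G i)" "t < q"
  shows "(m, q - t) \<in> set (Sseq G (i + t))"
  using assms
proof (induction t)
  case 0 then show ?case by simp
next
  case (Suc t)
  have "(m, q - t) \<in> set (Sseq G (i + t))" using Suc by simp
  then have "(m, q - t - 1) \<in> set (Sseq G (Suc (i + t)))" by (rule persist) (use Suc.prems in simp)
  then show ?case by (simp add: diff_Suc)
qed

lemma set_hatS_nextS: "set (hatS G prev) \<subseteq> set (nextS G prev)"
  unfolding hatS_def nextS_def by auto

lemma set_pi1: "set (pi1 G prev) \<subseteq> set (nextS G prev)"
  unfolding pi1_def using set_hatS_nextS by fastforce

lemma set_pi2: "set (pi2 G prev) \<subseteq> set (nextS G prev)"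
  unfolding pi2_def using set_hatS_nextS by fastforce

lemma pi2_mem: "(m, q) \<in> set (pi2 G prev) \<Longrightarrow> m \<notin> fst ` set prev"
  unfolding pi2_def by simp

context bdd begin

lemma Sseq_elem:
  assumes "j \<le> k" "a \<in> set (Sseq G j)"
  shows "fst a \<in> verts G" "1 \<le> snd a" "lev G (fst a) = j + snd a"
proof -
  have "a \<in> set (map key (PS G k j))" using assms(2) by (simp only: map_key_PS)
  then obtain e where e: "e \<in> set (PS G k j)" "a = key e" by auto
  show "fst a \<in> verts G" "1 \<le> snd a" "lev G (fst a) = j + snd a"
    using inv_PS_key(1-3)[OF assms(1) e(1)] e(2) by auto
qed

lemma blk_inj_on: "j \<le> k \<Longrightarrow> inj_on (blk G) (set (Sseq G j))"
proof (rule inj_onI)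
  fix a b assume j: "j \<le> k" and a: "a \<in> set (Sseq G j)" and b: "b \<in> set (Sseq G j)" and e: "blk G a = blk G b"
  obtain m q where aa: "a = (m, q)" by (cases a) auto
  obtain m' q' where bb: "b = (m', q')" by (cases b) auto
  show "a = b" unfolding aa bb
    by (rule blk_inj[of m m' j q q']) (use Sseq_elem[OF j a] Sseq_elem[OF j b] e aa bb in auto)
qed

lemma len_blk_S: "j \<le> k \<Longrightarrow> a \<in> set (Sseq G j) \<Longrightarrow> length (blk G a) = 2 ^ (k - j)"
  using Sseq_elem[of j a] len_blk[of "fst a" j "snd a"] by auto

lemma card_bool_lists: "card {w :: bool list. length w = L} = 2 ^ L"
  using card_lists_length_eq[of "UNIV :: bool set" L] by simp

lemma d_le_dexp: "j \<le> k \<Longrightarrow> card (set (Sseq G j)) \<le> 2 ^ (2 ^ (k - j))"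
proof -
  assume j: "j \<le> k"
  have "card (set (Sseq G j)) = card (blk G ` set (Sseq G j))"
    using card_image[OF blk_inj_on[OF j]] by simp
  also have "\<dots> \<le> card {w :: bool list. length w = 2 ^ (k - j)}"
    by (rule card_mono) (use finite_lists_length_eq[of "UNIV :: bool set"] len_blk_S[OF j] in auto)
  finally show ?thesis by (simp add: card_bool_lists)
qed

lemma d_Suc: "card (set (Sseq G (Suc j))) \<le> 2 * card (set (Sseq G j))"
  using card_length[of "Sseq G (Suc j)"] length_nextS[of G "Sseq G j"] by simp

lemma d_0: "card (set (Sseq G 0)) = 1" by simp

lemma d_le_exp: "card (set (Sseq G j)) \<le> 2 ^ j"
proof (induction j)
  case 0 then show ?case by simp
next
  case (Suc j) then show ?case using d_Suc[of j] by simp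
qed

lemma Q_bound: "(\<Sum>j<k. Qval G (Sseq G j)) \<le> (\<Sum>j\<le>k. card (set (Sseq G j)))"
proof -
  define D where "D = Sigma {..<k} (\<lambda>j. Sigma (set (pi2 G (Sseq G j))) (\<lambda>a. {..<snd a}))"
  define E where "E = Sigma {..k} (\<lambda>i. set (Sseq G i))"
  define phi' where "phi' = (\<lambda>(j::nat, a::nat \<times> nat, t::nat). (j + 1 + t, (fst a, snd a - t)))"
  have finD: "finite D" unfolding D_def by auto
  have finE: "finite E" unfolding E_def by auto
  have cD: "card D = (\<Sum>j<k. Qval G (Sseq G j))"
    unfolding D_def Qval_def by (simp add: card_SigmaI)
  have cE: "card E = (\<Sum>j\<le>k. card (set (Sseq G j)))"
    unfolding E_def by (simp add: card_SigmaI)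
  have memD: "j < k" "a \<in> set (pi2 G (Sseq G j))" "t < snd a" if "(j, a, t) \<in> D" for j a t
    using that unfolding D_def by auto
  have inS: "a \<in> set (Sseq G (Suc j))" if "a \<in> set (pi2 G (Sseq G j))" for j a
    using that set_pi2[of G "Sseq G j"] by auto
  have lvl: "lev G (fst a) = Suc j + snd a" "1 \<le> snd a" if "(j, a, t) \<in> D" for j a t
  proof -
    have "a \<in> set (Sseq G (Suc j))" using inS memD[OF that] by blast
    then show "lev G (fst a) = Suc j + snd a" "1 \<le> snd a" using Sseq_elem[of "Suc j" a] memD[OF that] by auto
  qed
  have levle: "lev G m \<le> Suc k" if "m \<in> verts G" for m using lev_le_T[OF that] TT_eq by simp
  have into: "phi' ` D \<subseteq> E"
  proof
    fix y assume "y \<in> phi' ` D"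
    then obtain j a t where jat: "(j, a, t) \<in> D" "y = phi' (j, a, t)" by auto
    have aS: "a \<in> set (Sseq G (Suc j))" using inS memD[OF jat(1)] by blast
    have fv: "fst a \<in> verts G" using Sseq_elem[of "Suc j" a] memD[OF jat(1)] aS by auto
    have "(fst a, snd a - t) \<in> set (Sseq G (Suc j + t))"
      using persist_t[of "fst a" "snd a" G "Suc j" t] aS memD[OF jat(1)] by simp
    moreover have "j + 1 + t \<le> k" using lvl[OF jat(1)] levle[OF fv] memD[OF jat(1)] by simp
    ultimately show "y \<in> E" unfolding E_def jat(2) phi'_def by simp
  qed
  have inj: "inj_on phi' D"
  proof (rule inj_onI)
    fix u w assume u: "u \<in> D" and w: "w \<in> D" and e: "phi' u = phi' w"
    obtain j a t where u': "u = (j, a, t)" by (cases u) auto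
    obtain j' a' t' where w': "w = (j', a', t')" by (cases w) auto
    have e1: "j + 1 + t = j' + 1 + t'" and e2: "fst a = fst a'" and e3: "snd a - t = snd a' - t'"
      using e unfolding u' w' phi'_def by auto
    have lv: "lev G (fst a) = Suc j + snd a" "lev G (fst a') = Suc j' + snd a'"
      using lvl u w u' w' by auto
    have t: "t < snd a" "t' < snd a'" using memD u w u' w' by auto
    have ap: "a \<in> set (pi2 G (Sseq G j))" using memD(2)[of j a t] u u' by auto
    have ap': "a' \<in> set (pi2 G (Sseq G j'))" using memD(2)[of j' a' t'] w w' by auto
    have notin: "fst a \<notin> fst ` set (Sseq G j)" using pi2_mem[of "fst a" "snd a"] ap by simp
    have notin': "fst a' \<notin> fst ` set (Sseq G j')" using pi2_mem[of "fst a'" "snd a'"] ap' by simp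
    have aS: "a \<in> set (Sseq G (Suc j))" using inS memD u u' by blast
    have aS': "a' \<in> set (Sseq G (Suc j'))" using inS memD w w' by blast
    have jj: "j = j'"
    proof (rule ccontr)
      assume "j \<noteq> j'"
      then consider "j < j'" | "j' < j" by linarith
      then show False
      proof cases
        case 1
        have s: "j' - Suc j < snd a" using lv e2 t by simp
        have eqj: "Suc j + (j' - Suc j) = j'" using 1 by simp
        have "(fst a, snd a - (j' - Suc j)) \<in> set (Sseq G (Suc j + (j' - Suc j)))"
          using persist_t[of "fst a" "snd a" G "Suc j" "j' - Suc j"] aS s by simp
        then have "(fst a, snd a - (j' - Suc j)) \<in> set (Sseq G j')" unfolding eqj .
        then have "fst a \<in> fst ` set (Sseq G j')" by (rule image_eqI[rotated]) simp
        then show False using notin' e2 by simp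
      next
        case 2
        have s: "j - Suc j' < snd a'" using lv e2 t by simp
        have eqj: "Suc j' + (j - Suc j') = j" using 2 by simp
        have "(fst a', snd a' - (j - Suc j')) \<in> set (Sseq G (Suc j' + (j - Suc j')))"
          using persist_t[of "fst a'" "snd a'" G "Suc j'" "j - Suc j'"] aS' s by simp
        then have "(fst a', snd a' - (j - Suc j')) \<in> set (Sseq G j)" unfolding eqj .
        then have "fst a' \<in> fst ` set (Sseq G j)" by (rule image_eqI[rotated]) simp
        then show False using notin e2 by simp
      qed
    qed
    then have "t = t'" using e1 by simp
    moreover have "snd a = snd a'" using lv e2 jj by simp
    ultimately show "u = w" unfolding u' w' using e2 jj by (simp add: prod_eq_iff)
  qed
  have "card D \<le> card E" using card_inj_on_le[OF inj into finE] .
  then show ?thesis using cD cE by simp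
qed

end


lemma sum_shift2: "(\<Sum>i\<in>{2..Suc k}. f (i - 2)) = (\<Sum>j<k. (f j :: real))"
proof (induction k)
  case 0 then show ?case by simp
next
  case (Suc k)
  have "(\<Sum>i\<in>{2..Suc (Suc k)}. f (i - 2)) = (\<Sum>i\<in>{2..Suc k}. f (i - 2)) + f k"
    by (simp add: sum.cl_ivl_Suc)
  then show ?case using Suc by simp
qed

lemma sum_shift1: "(\<Sum>i\<in>{1..k}. g i) = (\<Sum>j<k. (g (Suc j) :: real))"
  using sum.atLeast1_atMost_eq[of g k] by simp

lemma log2_nonpos: "0 \<le> y \<Longrightarrow> y \<le> 1 \<Longrightarrow> log 2 (y::real) \<le> 0"
proof (cases "y = 0")
  case False
  assume "0 \<le> y" "y \<le> 1"
  then have "0 < y" using False by simp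
  then show ?thesis using \<open>y \<le> 1\<close> by simp
qed (simp add: log_def)

locale bdd_src = bdd G x k for G x k +
  fixes s :: nat and p0 :: "nat \<Rightarrow> real" and p :: "bool \<Rightarrow> nat \<Rightarrow> nat \<Rightarrow> real"
  assumes source: "is_source s p0 p" and mupos: "mu s p0 p x > 0"
begin

interpretation S: src s p using source unfolding is_source_def by unfold_locales auto

lemma s1: "s \<ge> 1" using source unfolding is_source_def by simp

definition qf :: "nat \<times> nat \<Rightarrow> real" where
  "qf a = cc s p (blk G a) / real s"

lemma mu_le_prod: "mu s p0 p x \<le> (\<Prod>(a, L)\<in>IV. cc s p (take L (drop a x)))"
  by (rule mu_ivl[OF source IV_fin IV_bnd IV_disj])

lemma IV_pos: "(a, L) \<in> IV \<Longrightarrow> cc s p (take L (drop a x)) > 0"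
proof (rule ccontr)
  assume aL: "(a, L) \<in> IV" and "\<not> cc s p (take L (drop a x)) > 0"
  then have z: "cc s p (take L (drop a x)) = 0" using S.cc_nonneg[of "take L (drop a x)"] by simp
  have "(\<Prod>(a, L)\<in>IV. cc s p (take L (drop a x))) = 0"
    using IV_fin aL z by (intro prod_zero) force+
  then show False using mu_le_prod mupos by simp
qed

lemma log_IV: "(\<Sum>(a, L)\<in>IV. - log 2 (cc s p (take L (drop a x)) / real s))
    \<le> real (card IV) * log 2 (real s) - log 2 (mu s p0 p x)"
proof -
  let ?c = "\<lambda>u. cc s p (take (snd u) (drop (fst u) x))"
  have pos: "\<And>u. u \<in> IV \<Longrightarrow> ?c u > 0" using IV_pos by auto
  have sp: "real s > 0" using s1 by simp
  have "(\<Sum>(a, L)\<in>IV. - log 2 (cc s p (take L (drop a x)) / real s)) = (\<Sum>u\<in>IV. log 2 (real s) - log 2 (?c u))"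
  proof (intro sum.cong refl)
    fix u assume u: "u \<in> IV"
    have cu: "?c u > 0" by (rule pos[OF u])
    have "log 2 (?c u / real s) = log 2 (?c u) - log 2 (real s)" using cu sp by (simp add: log_divide)
    then show "(case u of (a, L) \<Rightarrow> - log 2 (cc s p (take L (drop a x)) / real s)) = log 2 (real s) - log 2 (?c u)"
      by (simp add: case_prod_beta)
  qed
  also have "\<dots> = real (card IV) * log 2 (real s) - (\<Sum>u\<in>IV. log 2 (?c u))"
    by (simp add: sum_subtractf)
  also have "(\<Sum>u\<in>IV. log 2 (?c u)) = log 2 (\<Prod>u\<in>IV. ?c u)"
  proof -
    have "ln (\<Prod>u\<in>IV. ?c u) = (\<Sum>u\<in>IV. ln (?c u))"
      by (rule ln_prod[OF IV_fin]) (use pos in force)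
    then show ?thesis unfolding log_def by (simp add: sum_divide_distrib)
  qed
  finally have eq: "(\<Sum>(a, L)\<in>IV. - log 2 (cc s p (take L (drop a x)) / real s))
      = real (card IV) * log 2 (real s) - log 2 (\<Prod>u\<in>IV. ?c u)" .
  have "log 2 (\<Prod>u\<in>IV. ?c u) \<ge> log 2 (mu s p0 p x)"
    using mu_le_prod mupos by (simp add: case_prod_beta)
  then show ?thesis unfolding eq by simp
qed

lemma pos_nonfirst:
  assumes i: "i \<in> {1..k}" and a: "a \<in> set (Sseq G i)" and c: "count_list (Sseq G i) a \<ge> 2"
  shows "cc s p (blk G a) > 0"
proof -
  have ik: "i \<le> k" using i by simp
  have "(\<Sum>e\<in>NF i. (if key e = a then 1 else 0 :: real))
      = (\<Sum>b\<in>set (Sseq G i). (real (count_list (Sseq G i) b) - 1) * (if b = a then 1 else 0))"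
    using sum_NF[OF ik, of "\<lambda>b. if b = a then 1 else 0"] by simp
  also have "\<dots> = real (count_list (Sseq G i) a) - 1"
    using a by (simp add: if_distrib[of "\<lambda>z. _ * z"] sum.delta' cong: if_cong)
  finally have nz: "(\<Sum>e\<in>NF i. (if key e = a then 1 else 0 :: real)) \<noteq> 0" using c by simp
  have "\<exists>e\<in>NF i. key e = a"
  proof (rule ccontr)
    assume "\<not> (\<exists>e\<in>NF i. key e = a)"
    then have "(\<Sum>e\<in>NF i. (if key e = a then 1 else 0 :: real)) = 0" by (intro sum.neutral) auto
    then show False using nz by simp
  qed
  then obtain e where e: "e \<in> NF i" "key e = a" by blast
  have "(pos e, 2 ^ (k - i)) \<in> IV" unfolding IV_def using e i by blast
  then have "cc s p (take (2 ^ (k - i)) (drop (pos e) x)) > 0" by (rule IV_pos)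
  moreover have "take (2 ^ (k - i)) (drop (pos e) x) = blk G a"
    using inv_PS_key(6)[OF ik] e unfolding NF_def by auto
  ultimately show ?thesis by simp
qed

lemma qf_le1: "qf a \<le> 1" unfolding qf_def using S.cc_le s1 by (simp add: divide_le_eq_1)
lemma qf_nn: "qf a \<ge> 0" unfolding qf_def using S.cc_nonneg by simp
lemma Lnn: "- log 2 (qf a) \<ge> 0" using log2_nonpos[OF qf_nn qf_le1] by simp

lemma sum_qf_le:
  assumes j: "Suc j \<le> k" and sub: "A \<subseteq> set (Sseq G (Suc j))"
  shows "(\<Sum>a\<in>A. qf a) \<le> 1"
proof -
  have fA: "finite A" using sub finite_subset by blast
  have inj: "inj_on (blk G) A" using blk_inj_on[OF j] sub by (rule inj_on_subset)
  have "(\<Sum>a\<in>A. cc s p (blk G a)) = (\<Sum>w\<in>blk G ` A. cc s p w)"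
    by (simp add: sum.reindex[OF inj])
  also have "\<dots> \<le> (\<Sum>w\<in>{w. length w = 2 ^ (k - Suc j)}. cc s p w)"
    by (rule sum_mono2) (use finite_lists_length_eq[of "UNIV :: bool set"] len_blk_S[OF j] sub S.cc_nonneg in auto)
  also have "\<dots> = real s" by (rule S.sum_len_cc)
  finally show ?thesis unfolding qf_def using s1 by (simp add: sum_divide_distrib[symmetric])
qed

lemma level_entropy:
  assumes j: "j < k"
  shows "Hent (pi1 G (Sseq G j)) + Hent (tilde (pi2 G (Sseq G j)))
    \<le> (\<Sum>a\<in>set (Sseq G (Suc j)). (real (count_list (Sseq G (Suc j)) a) - 1) * (- log 2 (qf a)))"
proof -
  let ?pr = "Sseq G j" and ?nx = "Sseq G (Suc j)"
  let ?u1 = "pi1 G ?pr" and ?u2 = "tilde (pi2 G ?pr)"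
  have nx: "?nx = nextS G ?pr" by simp
  have j1: "Suc j \<le> k" using j by simp
  have s1': "set ?u1 \<subseteq> set ?nx" using set_pi1 nx by metis
  have s2': "set ?u2 \<subseteq> set ?nx" using set_pi2 set_tilde nx by (metis order_trans)
  have kc: "real (count_list ?u1 a) + real (count_list ?u2 a) \<le> real (count_list ?nx a) - 1"
    if a: "a \<in> set ?nx" for a
  proof -
    have "snd a \<noteq> 0" using Sseq_elem(2)[OF j1 a] by simp
    then have "count_list ?u1 a + count_list ?u2 a \<le> count_list ?nx a - 1"
      using key_count[of a G ?pr] nx by simp
    moreover have "count_list ?nx a \<ge> 1" using a by (metis count_list_0_iff less_one not_le)
    ultimately show ?thesis by linarith
  qed
  have posq: "qf a > 0" if a: "a \<in> set ?nx" and c: "count_list ?u1 a + count_list ?u2 a \<ge> 1" for a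
  proof -
    have "real (count_list ?nx a) - 1 \<ge> 1" using kc[OF a] c by linarith
    then have "count_list ?nx a \<ge> 2" by linarith
    then have "cc s p (blk G a) > 0" using pos_nonfirst[of "Suc j" a] j a by simp
    then show ?thesis unfolding qf_def using s1 by simp
  qed
  have g1: "Hent ?u1 \<le> (\<Sum>a\<in>set ?u1. real (count_list ?u1 a) * (- log 2 (qf a)))"
  proof (rule gibbs)
    show "\<forall>a\<in>set ?u1. 0 < qf a"
    proof
      fix a assume a: "a \<in> set ?u1"
      then have "count_list ?u1 a \<ge> 1" by (metis count_list_0_iff less_one not_le)
      then show "0 < qf a" using posq[of a] s1' a by auto
    qed
    show "(\<Sum>a\<in>set ?u1. qf a) \<le> 1" by (rule sum_qf_le[OF j1 s1'])
  qed
  have g2: "Hent ?u2 \<le> (\<Sum>a\<in>set ?u2. real (count_list ?u2 a) * (- log 2 (qf a)))"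
  proof (rule gibbs)
    show "\<forall>a\<in>set ?u2. 0 < qf a"
    proof
      fix a assume a: "a \<in> set ?u2"
      then have "count_list ?u2 a \<ge> 1" by (metis count_list_0_iff less_one not_le)
      then show "0 < qf a" using posq[of a] s2' a by auto
    qed
    show "(\<Sum>a\<in>set ?u2. qf a) \<le> 1" by (rule sum_qf_le[OF j1 s2'])
  qed
  have e1: "(\<Sum>a\<in>set ?u1. real (count_list ?u1 a) * (- log 2 (qf a)))
      = (\<Sum>a\<in>set ?nx. real (count_list ?u1 a) * (- log 2 (qf a)))"
    by (rule sum.mono_neutral_left) (use s1' in \<open>auto simp: count_list_0_iff\<close>)
  have e2: "(\<Sum>a\<in>set ?u2. real (count_list ?u2 a) * (- log 2 (qf a)))
      = (\<Sum>a\<in>set ?nx. real (count_list ?u2 a) * (- log 2 (qf a)))"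
    by (rule sum.mono_neutral_left) (use s2' in \<open>auto simp: count_list_0_iff\<close>)
  have "Hent ?u1 + Hent ?u2 \<le> (\<Sum>a\<in>set ?nx. (real (count_list ?u1 a) + real (count_list ?u2 a)) * (- log 2 (qf a)))"
  proof -
    have sd: "(\<Sum>a\<in>set ?nx. (real (count_list ?u1 a) + real (count_list ?u2 a)) * (- log 2 (qf a)))
      = (\<Sum>a\<in>set ?nx. real (count_list ?u1 a) * (- log 2 (qf a))) + (\<Sum>a\<in>set ?nx. real (count_list ?u2 a) * (- log 2 (qf a)))"
      by (simp only: distrib_right sum.distrib)
    show ?thesis unfolding sd using g1 g2 e1 e2 by linarith
  qed
  also have "\<dots> \<le> (\<Sum>a\<in>set ?nx. (real (count_list ?nx a) - 1) * (- log 2 (qf a)))"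
    by (rule sum_mono, rule mult_right_mono[OF kc Lnn])
  finally show ?thesis .
qed

definition dd :: "nat \<Rightarrow> real" where "dd j = real (card (set (Sseq G j)))"

lemma card_IV_le: "real (card IV) \<le> (\<Sum>j<k. dd j) + 1"
proof -
  have ge: "card (set (Sseq G i)) \<le> length (Sseq G i)" for i by (rule card_length)
  have "real (card IV) = (\<Sum>i\<in>{1..k}. real (length (Sseq G i) - card (set (Sseq G i))))"
    unfolding card_IV by simp
  also have "\<dots> \<le> (\<Sum>i\<in>{1..k}. 2 * dd (i - 1) - dd i)"
  proof (rule sum_mono)
    fix i assume i: "i \<in> {1..k}"
    have "real (length (Sseq G i) - card (set (Sseq G i))) = real (length (Sseq G i)) - dd i"
      unfolding dd_def using ge[of i] by simp
    also have "\<dots> \<le> 2 * dd (i - 1) - dd i"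
    proof -
      obtain j where ij: "i = Suc j" using i by (cases i) auto
      have "length (Sseq G i) \<le> 2 * card (set (Sseq G (i - 1)))"
        using length_nextS[of G "Sseq G j"] unfolding ij by simp
      then show ?thesis unfolding dd_def by simp
    qed
    finally show "real (length (Sseq G i) - card (set (Sseq G i))) \<le> 2 * dd (i - 1) - dd i" .
  qed
  also have "\<dots> = 2 * (\<Sum>j<k. dd j) - (\<Sum>j<k. dd (Suc j))"
    unfolding sum_shift1 by (simp add: sum_subtractf sum_distrib_left)
  finally have c1: "real (card IV) \<le> 2 * (\<Sum>j<k. dd j) - (\<Sum>j<k. dd (Suc j))" .
  have "(\<Sum>j<k. dd (Suc j)) \<ge> (\<Sum>j<k. dd j) - 1"
  proof -
    have "(\<Sum>j<Suc k. dd j) = dd 0 + (\<Sum>j<k. dd (Suc j))" by (rule sum.lessThan_Suc_shift)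
    moreover have "(\<Sum>j<Suc k. dd j) = (\<Sum>j<k. dd j) + dd k" by simp
    moreover have "dd 0 = 1" unfolding dd_def by simp
    moreover have "dd k \<ge> 0" unfolding dd_def by simp
    ultimately show ?thesis by linarith
  qed
  then show ?thesis using c1 by linarith
qed

lemma main_bound:
  "real_of_int (sigma_len G) + log 2 (mu s p0 p x)
    \<le> 1 + 2 * real k + 5 * (\<Sum>j\<le>k. dd j) + ((\<Sum>j\<le>k. dd j) + 1) * log 2 (real s)"
proof -
  let ?P = "\<lambda>j. Sseq G j"
  let ?H = "\<lambda>j. Hent (pi1 G (?P j)) + Hent (tilde (pi2 G (?P j)))"
  let ?D = "(\<Sum>j\<le>k. dd j)"
  have sl: "real_of_int (sigma_len G) = 1 + (\<Sum>j<k. real_of_int (Mval G (?P j)))"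
  proof -
    have "real_of_int (sigma_len G) = 1 + (\<Sum>i\<in>{2..Suc k}. real_of_int (Mval G (?P (i - 2))))"
      unfolding sigma_len_def TT_eq by simp
    then show ?thesis using sum_shift2[of "\<lambda>j. real_of_int (Mval G (?P j))" k] by simp
  qed
  have Mj: "real_of_int (Mval G (?P j)) \<le> 4 * dd j + real (Qval G (?P j)) + ?H j + 2" for j
  proof -
    have a: "real (length (nextS G (?P j))) \<le> 2 * dd j" using length_nextS[of G "?P j"] unfolding dd_def by simp
    have b: "real (length (hatS G (?P j))) \<le> 2 * dd j" using length_hatS[of G "?P j"] unfolding dd_def by simp
    have c: "real_of_int \<lceil>Hent (pi1 G (?P j))\<rceil> \<le> Hent (pi1 G (?P j)) + 1" by simp
    have d: "real_of_int \<lceil>Hent (tilde (pi2 G (?P j)))\<rceil> \<le> Hent (tilde (pi2 G (?P j))) + 1" by simp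
    have m: "real_of_int (Mval G (?P j)) = real (length (nextS G (?P j))) + real (length (hatS G (?P j)))
        + real (Qval G (?P j)) + real_of_int \<lceil>Hent (pi1 G (?P j))\<rceil> + real_of_int \<lceil>Hent (tilde (pi2 G (?P j)))\<rceil>"
      unfolding Mval_def by simp
    show ?thesis unfolding m using a b c d by linarith
  qed
  have Qs: "(\<Sum>j<k. real (Qval G (?P j))) \<le> ?D"
    using Q_bound unfolding dd_def by (simp flip: of_nat_sum)
  have dlt: "(\<Sum>j<k. dd j) \<le> ?D"
    by (rule sum_mono2) (auto simp: dd_def)
  have Hs: "(\<Sum>j<k. ?H j) \<le> real (card IV) * log 2 (real s) - log 2 (mu s p0 p x)"
  proof -
    have "(\<Sum>j<k. ?H j) \<le> (\<Sum>j<k. \<Sum>a\<in>set (?P (Suc j)). (real (count_list (?P (Suc j)) a) - 1) * (- log 2 (qf a)))"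
      by (rule sum_mono) (rule level_entropy, simp)
    also have "\<dots> = (\<Sum>i\<in>{1..k}. \<Sum>a\<in>set (?P i). (real (count_list (?P i) a) - 1) * (- log 2 (qf a)))"
      by (rule sum_shift1[symmetric])
    also have "\<dots> = (\<Sum>(a, L)\<in>IV. - log 2 (cc s p (take L (drop a x)) / real s))"
      using sum_IV[of "\<lambda>w. - log 2 (cc s p w / real s)"] unfolding qf_def by simp
    also have "\<dots> \<le> real (card IV) * log 2 (real s) - log 2 (mu s p0 p x)" by (rule log_IV)
    finally show ?thesis .
  qed
  have ls: "log 2 (real s) \<ge> 0" using s1 by simp
  have cIV: "real (card IV) * log 2 (real s) \<le> (?D + 1) * log 2 (real s)"
    using card_IV_le dlt ls by (intro mult_right_mono) auto
  have "real_of_int (sigma_len G) \<le> 1 + (\<Sum>j<k. 4 * dd j + real (Qval G (?P j)) + ?H j + 2)"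
    unfolding sl by (simp add: sum_mono Mj)
  also have "\<dots> = 1 + 4 * (\<Sum>j<k. dd j) + (\<Sum>j<k. real (Qval G (?P j))) + (\<Sum>j<k. ?H j) + 2 * real k"
    by (simp add: sum.distrib sum_distrib_left)
  finally show ?thesis using Qs dlt Hs cIV by linarith
qed

end


definition FF :: "nat \<Rightarrow> nat" where
  "FF k = (\<Sum>i\<le>k. min (2 ^ (k - i)) (2 ^ (2 ^ i)))"

lemma tail_sum: "a \<le> k \<Longrightarrow> (\<Sum>i\<in>{Suc a..k}. (2::nat) ^ (k - i)) < 2 ^ (k - a)"
proof -
  assume a: "a \<le> k"
  have "(\<Sum>i\<in>{Suc a..k}. (2::nat) ^ (k - i)) = (\<Sum>t\<in>{0..<k - a}. 2 ^ t)"
    by (rule sum.reindex_bij_witness[of _ "\<lambda>t. k - t" "\<lambda>i. k - i"]) (use a in auto)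
  also have "\<dots> = 2 ^ (k - a) - 1" by (rule sum_power2)
  finally show ?thesis by simp
qed

lemma dexp_sum: "(\<Sum>i<Suc a. (2::nat) ^ (2 ^ i)) \<le> 2 * 2 ^ (2 ^ a)"
proof (induction a)
  case 0 then show ?case by simp
next
  case (Suc a)
  have "(2::nat) ^ (2 ^ Suc a) = 2 ^ (2 ^ a) * 2 ^ (2 ^ a)" by (simp add: power_add[symmetric] mult_2)
  moreover have "(2::nat) \<le> 2 ^ (2 ^ a)"
  proof -
    have "(2::nat) ^ 1 \<le> 2 ^ (2 ^ a)" by (rule power_increasing) simp_all
    then show ?thesis by simp
  qed
  ultimately have "2 * 2 ^ (2 ^ a) \<le> (2::nat) ^ (2 ^ Suc a)" by simp
  then show ?case using Suc by simp
qed

lemma lin_exp: "5 \<le> a \<Longrightarrow> 4 * a + 8 \<le> (2::nat) ^ a"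
proof (induction a rule: dec_induct)
  case base then show ?case by simp
next
  case (step n) then show ?case by simp
qed

lemma lin_exp2: "8 \<le> h \<Longrightarrow> 2 * h + 1 \<le> (2::nat) ^ (h - 2)"
proof (induction h rule: dec_induct)
  case base then show ?case by simp
next
  case (step n)
  have e: "Suc n - 2 = Suc (n - 2)" using step by simp
  have "2 ^ (Suc n - 2) = 2 * (2::nat) ^ (n - 2)" by (simp only: e power_Suc)
  then show ?case using step by simp
qed

lemma small_part:
  assumes k: "64 \<le> k" and a: "2 ^ a \<le> k"
  shows "k * (2 * 2 ^ (2 ^ (a - 1))) \<le> (2::nat) ^ (k - 1)"
proof -
  define h where "h = k div 2"
  have h8: "8 \<le> h" using k unfolding h_def by simp
  have hk: "2 * h \<le> k" "k \<le> 2 * h + 1" unfolding h_def by auto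
  have "2 ^ (a - 1) \<le> h"
  proof (cases a)
    case 0 then show ?thesis using h8 by simp
  next
    case (Suc b)
    then have "2 * 2 ^ b \<le> k" using a by simp
    then show ?thesis unfolding h_def using Suc by simp
  qed
  then have "k * (2 * 2 ^ (2 ^ (a - 1))) \<le> k * (2 * 2 ^ h)" by simp
  also have "\<dots> \<le> 2 ^ (h - 2) * (2 * 2 ^ h)" using lin_exp2[OF h8] hk by simp
  also have "\<dots> = 2 ^ (2 * h - 1)"
  proof -
    have e: "2 * h - 1 = (h - 2) + Suc h" using h8 by simp
    show ?thesis by (simp only: e power_add power_Suc)
  qed
  also have "\<dots> \<le> 2 ^ (k - 1)" using hk by (intro power_increasing) auto
  finally show ?thesis .
qed

lemma FF_bound:
  assumes k: "64 \<le> k"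
  shows "k * FF k \<le> 3 * 2 ^ k"
proof -
  obtain a where a: "2 ^ a \<le> k" "k < 2 ^ (a + 1)" using ex_power_ivl1[of 2 k] k by auto
  have a6: "6 \<le> a"
  proof (rule ccontr)
    assume "\<not> 6 \<le> a"
    then have "a + 1 \<le> 6" by simp
    then have "(2::nat) ^ (a + 1) \<le> 2 ^ 6" by (rule power_increasing) simp
    then show False using a k by simp
  qed
  have ak: "a < k" using a(1) less_le_trans[OF less_exp] by blast
  let ?f = "\<lambda>i. min ((2::nat) ^ (k - i)) (2 ^ (2 ^ i))"
  define A where "A = (\<Sum>i<a. ?f i)"
  define M where "M = ?f a"
  define T where "T = (\<Sum>i\<in>{Suc a..k}. ?f i)"
  have split: "FF k = A + M + T"
  proof -
    have eq: "{..k} = {..<Suc a} \<union> {Suc a..k}" using ak by auto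
    have "FF k = (\<Sum>i<Suc a. ?f i) + T" unfolding FF_def T_def
      by (subst eq) (rule sum.union_disjoint, auto)
    then show ?thesis unfolding A_def M_def by simp
  qed
  have T: "T < 2 ^ (k - a)"
  proof -
    have "T \<le> (\<Sum>i\<in>{Suc a..k}. (2::nat) ^ (k - i))" unfolding T_def by (rule sum_mono) simp
    then show ?thesis using tail_sum[of a k] ak by simp
  qed
  have A: "A \<le> 2 * 2 ^ (2 ^ (a - 1))"
  proof -
    obtain b where b: "a = Suc b" using a6 by (cases a) auto
    have "A \<le> (\<Sum>i<Suc b. (2::nat) ^ (2 ^ i))" unfolding A_def b by (rule sum_mono) simp
    then show ?thesis using dexp_sum[of b] b by simp
  qed
  have kA: "k * A \<le> 2 ^ (k - 1)"
    using mult_le_mono2[OF A, of k] small_part[OF k a(1)] by linarith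
  have kT: "k * T \<le> 2 * 2 ^ k"
  proof -
    have "k * T \<le> 2 ^ (a + 1) * 2 ^ (k - a)" using a(2) T by (intro mult_le_mono) auto
    also have "\<dots> = 2 * 2 ^ k" using ak by (simp add: power_add[symmetric])
    finally show ?thesis .
  qed
  have hk: "(2::nat) ^ (k - 1) + 2 ^ (k - 1) = 2 ^ k"
    using k by (metis Suc_diff_1 mult_2 not_less_eq_eq order_le_less_trans power_Suc zero_less_numeral le0 less_le_trans numeral_le_iff)
  show ?thesis
  proof (cases "2 ^ a + a + 2 \<le> k")
    case True
    have "M \<le> 2 ^ (2 ^ a)" unfolding M_def by simp
    also have "\<dots> \<le> 2 ^ (k - a - 2)" using True by (intro power_increasing) auto
    finally have M1: "M \<le> 2 ^ (k - a - 2)" .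
    have "k * M \<le> 2 ^ (a + 1) * 2 ^ (k - a - 2)" using a(2) M1 by (intro mult_le_mono) auto
    also have "\<dots> = 2 ^ (k - 1)"
    proof -
      have e: "k - 1 = (a + 1) + (k - a - 2)" using True by simp
      show ?thesis by (simp only: e power_add)
    qed
    finally have kM: "k * M \<le> 2 ^ (k - 1)" .
    show ?thesis unfolding split using kA kT kM hk by (simp add: algebra_simps)
  next
    case False
    have M2: "M \<le> 2 ^ (k - a)" unfolding M_def by simp
    have "4 * k \<le> 5 * 2 ^ a" using False lin_exp[of a] a6 by simp
    then have "4 * k * 2 ^ (k - a) \<le> 5 * 2 ^ a * 2 ^ (k - a)" by simp
    also have "\<dots> = 5 * 2 ^ k" using ak by (simp add: power_add[symmetric])
    finally have q: "4 * k * 2 ^ (k - a) \<le> 5 * 2 ^ k" .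
    have "2 * k * (M + T) \<le> 2 * k * (2 * 2 ^ (k - a))" using M2 T by simp
    then have "2 * k * (M + T) \<le> 5 * 2 ^ k" using q by (simp add: algebra_simps)
    then show ?thesis unfolding split using kA hk by (simp add: algebra_simps)
  qed
qed


lemma sq_exp: "10 \<le> k \<Longrightarrow> 3 * k * k \<le> (2::nat) ^ k"
proof (induction k rule: dec_induct)
  case base then show ?case by simp
next
  case (step n)
  have "3 * Suc n * Suc n = 3 * n * n + (6 * n + 3)" by (simp add: algebra_simps)
  also have "\<dots> \<le> 3 * n * n + 3 * n * n"
  proof -
    have "3 * n * 10 \<le> 3 * n * n" using step by (intro mult_le_mono2) simp
    then have "6 * n + 3 \<le> 3 * n * n" using step by linarith
    then show ?thesis by simp
  qed
  also have "\<dots> \<le> 2 ^ Suc n" using step by simp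
  finally show ?case .
qed

context bdd_src begin

lemma dd_le: "j \<le> k \<Longrightarrow> dd j \<le> real (min (2 ^ j) (2 ^ (2 ^ (k - j))))"
  unfolding dd_def using d_le_exp[of j] d_le_dexp[of j] by simp

lemma D_le_FF: "(\<Sum>j\<le>k. dd j) \<le> real (FF k)"
proof -
  have "(\<Sum>j\<le>k. dd j) \<le> (\<Sum>j\<le>k. real (min (2 ^ j) (2 ^ (2 ^ (k - j)))))"
    by (rule sum_mono) (simp add: dd_le)
  also have "(\<Sum>j\<le>k. real (min (2 ^ j) (2 ^ (2 ^ (k - j))))) = (\<Sum>i\<le>k. real (min (2 ^ (k - i)) (2 ^ (2 ^ i))))"
    by (rule sum.reindex_bij_witness[of _ "\<lambda>i. k - i" "\<lambda>i. k - i"]) auto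
  also have "\<dots> = real (FF k)" unfolding FF_def by simp
  finally show ?thesis .
qed

lemma D_le_exp: "(\<Sum>j\<le>k. dd j) \<le> 2 * 2 ^ k - 1"
proof -
  have "(\<Sum>j\<le>k. dd j) \<le> (\<Sum>j\<le>k. (2::real) ^ j)"
    by (rule sum_mono) (use d_le_exp in \<open>simp add: dd_def\<close>)
  also have "(\<Sum>j\<le>k. (2::real) ^ j) = real (\<Sum>j<Suc k. (2::nat) ^ j)" by (simp add: lessThan_Suc_atMost)
  also have "(\<Sum>j<Suc k. (2::nat) ^ j) = 2 ^ Suc k - 1" using sum_power2[of "Suc k"] by (simp add: atLeast0LessThan)
  finally show ?thesis by simp
qed

definition CC :: real where "CC = 64 * (139 + 2 * log 2 (real s))"

lemma final_k:
  assumes k1: "1 \<le> k"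
  shows "real_of_int (sigma_len G) + log 2 (mu s p0 p x)
    \<le> 2 ^ k / real k * (16 + 4 * log 2 (real s) + (if k < 64 then CC else 0))"
proof -
  let ?D = "\<Sum>j\<le>k. dd j"
  let ?L = "log 2 (real s)"
  have L: "?L \<ge> 0" using s1 by simp
  have D0: "?D \<ge> 0" by (rule sum_nonneg) (simp add: dd_def)
  have mb: "real_of_int (sigma_len G) + log 2 (mu s p0 p x) \<le> 1 + 2 * real k + 5 * ?D + (?D + 1) * ?L"
    by (rule main_bound)
  have kp: "real k > 0" using k1 by simp
  show ?thesis
  proof (cases "k < 64")
    case True
    have De: "?D \<le> 2 * 2 ^ k - 1" by (rule D_le_exp)
    have p1: "(1::real) \<le> 2 ^ k" by simp
    have "1 + 2 * real k + 5 * ?D + (?D + 1) * ?L \<le> 1 + 2 * real k + 10 * 2 ^ k + (2 * 2 ^ k) * ?L"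
      using De L by (intro add_mono mult_right_mono) auto
    also have "\<dots> \<le> 2 ^ k * (139 + 2 * ?L)"
    proof -
      have r1: "real k \<le> 63" using True by simp
      have r2: "(129::real) \<le> 2 ^ k * 129" using p1 by simp
      have "1 + 2 * real k \<le> 2 ^ k * 129" using r1 r2 by linarith
      then show ?thesis by (simp add: algebra_simps)
    qed
    also have "\<dots> = 2 ^ k / 64 * CC" unfolding CC_def by simp
    also have "\<dots> \<le> 2 ^ k / real k * CC"
    proof (rule mult_right_mono)
      show "(2::real) ^ k / 64 \<le> 2 ^ k / real k" using True kp by (intro divide_left_mono) auto
      show "0 \<le> CC" unfolding CC_def using L by simp
    qed
    also have "\<dots> \<le> 2 ^ k / real k * (16 + 4 * ?L + CC)"
      using L kp by (intro mult_left_mono) auto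
    finally show ?thesis using mb True by simp
  next
    case False
    then have k64: "64 \<le> k" by simp
    have DF: "?D \<le> real (FF k)" by (rule D_le_FF)
    have kF: "real k * ?D \<le> 3 * 2 ^ k"
    proof -
      have "real k * ?D \<le> real k * real (FF k)" using DF kp by simp
      also have "\<dots> = real (k * FF k)" by simp
      also have "\<dots> \<le> real (3 * 2 ^ k)" using FF_bound[OF k64] by (simp only: of_nat_le_iff)
      finally show ?thesis by simp
    qed
    have sq: "real k + 2 * real k * real k \<le> 2 ^ k"
    proof -
      have "3 * k * k \<le> (2::nat) ^ k" using sq_exp k64 by simp
      then have "real (3 * k * k) \<le> real ((2::nat) ^ k)" by (simp only: of_nat_le_iff)
      then have "3 * real k * real k \<le> 2 ^ k" by simp
      moreover have "real k \<le> real k * real k" using k1 by simp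
      ultimately show ?thesis by linarith
    qed
    have kk: "real k \<le> 2 ^ k" using sq kp by (smt (verit) mult_nonneg_nonneg of_nat_0_le_iff)
    have "real k * (1 + 2 * real k + 5 * ?D + (?D + 1) * ?L)
        = real k + 2 * real k * real k + 5 * (real k * ?D) + (real k * ?D + real k) * ?L"
      by (simp add: algebra_simps)
    also have "\<dots> \<le> 2 ^ k + 5 * (3 * 2 ^ k) + (3 * 2 ^ k + 2 ^ k) * ?L"
      using sq kF kk L by (intro add_mono mult_right_mono mult_left_mono) auto
    also have "\<dots> \<le> 2 ^ k * (16 + 4 * ?L)" by (simp add: algebra_simps)
    finally have "real k * (1 + 2 * real k + 5 * ?D + (?D + 1) * ?L) \<le> 2 ^ k * (16 + 4 * ?L)" .
    then have "1 + 2 * real k + 5 * ?D + (?D + 1) * ?L \<le> 2 ^ k / real k * (16 + 4 * ?L)"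
      using kp by (simp add: field_simps)
    then show ?thesis using mb False by simp
  qed
qed

end

theorem theorem1:
  fixes s :: nat and p0 :: "nat \<Rightarrow> real" and p :: "bool \<Rightarrow> nat \<Rightarrow> nat \<Rightarrow> real"
  assumes "is_source s p0 p"
  shows "\<exists>\<delta> :: nat \<Rightarrow> real. \<delta> \<longlonglongrightarrow> 0 \<and>
    (\<forall>k n x G. k \<ge> 1 \<longrightarrow> n = 2 ^ k \<longrightarrow> length x = n \<longrightarrow> x \<in> S_dyadic \<longrightarrow>
       in_calG_star G \<longrightarrow> phi G (root G) = x \<longrightarrow> mu s p0 p x > 0 \<longrightarrow>
       real_of_int (sigma_len G) + log 2 (mu s p0 p x)
         \<le> real n / log 2 (real n) * (16 + 4 * log 2 (real s) + \<delta> n))"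
proof -
  define C where "C = 64 * (139 + 2 * log 2 (real s))"
  define \<delta> where "\<delta> = (\<lambda>n::nat. if n < 2 ^ 64 then C else (0::real))"
  have lim: "\<delta> \<longlonglongrightarrow> 0"
  proof (rule tendsto_eventually)
    show "\<forall>\<^sub>F n in sequentially. \<delta> n = 0"
      unfolding eventually_sequentially \<delta>_def by (intro exI[of _ "2 ^ 64"]) auto
  qed
  have main: "real_of_int (sigma_len G) + log 2 (mu s p0 p x)
         \<le> real n / log 2 (real n) * (16 + 4 * log 2 (real s) + \<delta> n)"
    if k1: "k \<ge> 1" and n: "n = 2 ^ k" and lx: "length x = n" and st: "in_calG_star G"
      and ph: "phi G (root G) = x" and mp: "mu s p0 p x > 0" for k n x G
  proof -
    interpret bdd_src G x k s p0 p
      by unfold_locales (use st ph lx n assms mp in auto)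
    have lg: "log 2 (real n) = real k" unfolding n by (simp add: log_nat_power)
    have dl: "\<delta> n = (if k < 64 then CC else 0)"
    proof -
      have "(n < 2 ^ 64) = (k < 64)" unfolding n using power_strict_increasing_iff[of "2::nat" k 64] by simp
      then show ?thesis unfolding \<delta>_def C_def CC_def by simp
    qed
    show ?thesis using final_k[OF k1] unfolding lg dl by (simp add: n)
  qed
  show ?thesis using lim main by blast
qed


end
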